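(* Let $(X,\mathcal F)$ be a measurable space, $\mu\colon\mathcal F\to[0,\infty]$ a submodular monotone measure, $A\in\mathcal F$, $p>1$ and $q$ with $1/p+1/q=1$. Let $f,g,h\colon X\to[0,\infty)$ be measurable and put $a=\int_A gf^p\,d\mu$, $b=\int_A hf^p\,d\mu$, assumed to lie in $(0,\infty)$. Then $$\int_A f\,d\mu\le 2^{1/p}H_{pq}(a,b),\qquad H_{pq}(a,b)=(ab)^{1/p}\Big(\int_A\frac{1}{(bg+ah)^{q-1}}\,d\mu\Big)^{1/q},$$ with the convention $1/0=\infty$. Moreover, equality holds if $(bg+ah)^q f^p=\gamma$ on $X$ for some constant $\gamma\ge0$, provided that either $\mu$ is modular or $gf^p$ and $hf^p$ are comonotone. All integrals are Choquet integrals.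
   Context: A monotone measure is a map $\mu\colon\mathcal F\to[0,\infty]$ with $\mu(\emptyset)=0$, $\mu(X)>0$ and $\mu(A)\le\mu(B)$ for $A\subset B$. It is submodular if $\mu(A\cap B)+\mu(A\cup B)\le\mu(A)+\mu(B)$ for all $A,B\in\mathcal F$, and modular if equality always holds. The Choquet integral of a measurable $f\colon X\to[0,\infty]$ on $A\in\mathcal F$ is $\int_A f\,d\mu=\int_0^\infty\mu(A\cap\{f\ge t\})\,dt$. Functions $\phi,\psi$ are comonotone if $(\phi(x)-\phi(y))(\psi(x)-\psi(y))\ge0$ for all $x,y$. *)

theory Defs
  imports "HOL-Analysis.Analysis"
begin

definition monotone_measure :: "'a measure \<Rightarrow> ('a set \<Rightarrow> ennreal) \<Rightarrow> bool" where
  "monotone_measure M \<mu> \<longleftrightarrow>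
     \<mu> {} = 0 \<and> \<mu> (space M) > 0 \<and>
     (\<forall>A\<in>sets M. \<forall>B\<in>sets M. A \<subseteq> B \<longrightarrow> \<mu> A \<le> \<mu> B)"

definition submodular :: "'a measure \<Rightarrow> ('a set \<Rightarrow> ennreal) \<Rightarrow> bool" where
  "submodular M \<mu> \<longleftrightarrow>
     (\<forall>A\<in>sets M. \<forall>B\<in>sets M. \<mu> (A \<inter> B) + \<mu> (A \<union> B) \<le> \<mu> A + \<mu> B)"

definition modular :: "'a measure \<Rightarrow> ('a set \<Rightarrow> ennreal) \<Rightarrow> bool" where
  "modular M \<mu> \<longleftrightarrow>
     (\<forall>A\<in>sets M. \<forall>B\<in>sets M. \<mu> (A \<inter> B) + \<mu> (A \<union> B) = \<mu> A + \<mu> B)"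

definition choquet :: "'a measure \<Rightarrow> ('a set \<Rightarrow> ennreal) \<Rightarrow> 'a set \<Rightarrow> ('a \<Rightarrow> ennreal) \<Rightarrow> ennreal" where
  "choquet M \<mu> A f =
     (\<integral>\<^sup>+ t. indicator {0..} t * \<mu> (A \<inter> {x \<in> space M. ennreal t \<le> f x}) \<partial>lborel)"

definition comonotone :: "'a set \<Rightarrow> ('a \<Rightarrow> real) \<Rightarrow> ('a \<Rightarrow> real) \<Rightarrow> bool" where
  "comonotone X \<phi> \<psi> \<longleftrightarrow>
     (\<forall>x\<in>X. \<forall>y\<in>X. (\<phi> x - \<phi> y) * (\<psi> x - \<psi> y) \<ge> 0)"

text \<open>1/(b g + a h)^(q-1) with the convention 1/0 = oo.\<close>
definition recip_pow :: "real \<Rightarrow> real \<Rightarrow> ennreal" where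
  "recip_pow q s = (if s = 0 then \<infinity> else ennreal (1 / (s powr (q - 1))))"

definition Hpq :: "real \<Rightarrow> real \<Rightarrow> real \<Rightarrow> real \<Rightarrow> ennreal \<Rightarrow> ennreal" where
  "Hpq p q a b I = (if I = \<infinity> then \<infinity>
      else ennreal ((a * b) powr (1 / p) * (enn2real I) powr (1 / q)))"

end

theory Submission
  imports Defs
begin

definition Lv :: "'a measure \<Rightarrow> 'a set \<Rightarrow> ('a \<Rightarrow> nat) \<Rightarrow> nat \<Rightarrow> 'a set" where
  "Lv M A u j = A \<inter> {x\<in>space M. j \<le> u x}"

definition nmeas :: "'a measure \<Rightarrow> ('a \<Rightarrow> nat) \<Rightarrow> bool" where
  "nmeas M u \<longleftrightarrow> (\<forall>j. {x\<in>space M. j \<le> u x} \<in> sets M)"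

definition Ts :: "'a measure \<Rightarrow> ('a set \<Rightarrow> ennreal) \<Rightarrow> 'a set \<Rightarrow> ('a \<Rightarrow> nat) \<Rightarrow> nat \<Rightarrow> ennreal" where
  "Ts M \<mu> A u N = (\<Sum>k<N. \<mu> (Lv M A u (Suc k)))"

lemma nmeas_add:
  assumes "nmeas M u" "nmeas M v" shows "nmeas M (\<lambda>x. u x + v x)"
  unfolding nmeas_def
proof
  fix j
  have "{x\<in>space M. j \<le> u x + v x} = (\<Union>i\<in>{..j}. {x\<in>space M. i \<le> u x} \<inter> {x\<in>space M. j - i \<le> v x})"
  proof (rule set_eqI, rule iffI)
    fix x assume x: "x \<in> {x\<in>space M. j \<le> u x + v x}"
    show "x \<in> (\<Union>i\<in>{..j}. {x\<in>space M. i \<le> u x} \<inter> {x\<in>space M. j - i \<le> v x})"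
      using x by (intro UN_I[of "min j (u x)"]) auto
  qed auto
  also have "\<dots> \<in> sets M" using assms unfolding nmeas_def by auto
  finally show "{x\<in>space M. j \<le> u x + v x} \<in> sets M" .
qed

lemma nmeas_min:
  assumes "nmeas M u" shows "nmeas M (\<lambda>x. min (u x) N)"
  unfolding nmeas_def
proof
  fix j
  show "{x\<in>space M. j \<le> min (u x) N} \<in> sets M"
  proof (cases "j \<le> N")
    case True
    then have "{x\<in>space M. j \<le> min (u x) N} = {x\<in>space M. j \<le> u x}" by auto
    then show ?thesis using assms unfolding nmeas_def by simp
  next
    case False
    then have "{x\<in>space M. j \<le> min (u x) N} = {}" by auto
    then show ?thesis by (metis sets.empty_sets)
  qed
qed

lemma nmeas_minus1:
  assumes "nmeas M u" shows "nmeas M (\<lambda>x. u x - 1)"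
  unfolding nmeas_def
proof
  fix j
  show "{x\<in>space M. j \<le> u x - 1} \<in> sets M"
  proof (cases "j = 0")
    case True
    then show ?thesis by simp
  next
    case False
    then have "{x\<in>space M. j \<le> u x - 1} = {x\<in>space M. Suc j \<le> u x}" by auto
    then show ?thesis using assms unfolding nmeas_def by simp
  qed
qed

lemma Lv_sets: "A \<in> sets M \<Longrightarrow> nmeas M u \<Longrightarrow> Lv M A u j \<in> sets M"
  unfolding Lv_def nmeas_def by auto

lemma mu_mono: "monotone_measure M \<mu> \<Longrightarrow> X \<in> sets M \<Longrightarrow> Y \<in> sets M \<Longrightarrow> X \<subseteq> Y \<Longrightarrow> \<mu> X \<le> \<mu> Y"
  unfolding monotone_measure_def by blast

lemma mu_empty: "monotone_measure M \<mu> \<Longrightarrow> \<mu> {} = 0"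
  unfolding monotone_measure_def by blast

lemma step_sub:
  assumes mon: "monotone_measure M \<mu>" and sub: "submodular M \<mu>" and A: "A \<in> sets M"
    and u: "nmeas M u" and v: "nmeas M v"
  shows "Ts M \<mu> A (\<lambda>x. u x + v x) N \<le> Ts M \<mu> A (\<lambda>x. u x + (v x - 1)) N + \<mu> (Lv M A v 1)"
proof (cases N)
  case 0
  then show ?thesis by (simp add: Ts_def)
next
  case (Suc n)
  define F where "F = (\<lambda>x. u x + (v x - 1))"
  define E where "E = Lv M A v 1"
  have F: "nmeas M F" unfolding F_def by (intro nmeas_add nmeas_minus1 u v)
  have E: "E \<in> sets M" unfolding E_def using A v by (rule Lv_sets)
  have LF: "Lv M A F k \<in> sets M" for k using A F by (rule Lv_sets)
  have un: "Lv M A F (Suc k) \<union> (Lv M A F k \<inter> E) = Lv M A (\<lambda>x. u x + v x) (Suc k)" for k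
    unfolding Lv_def E_def F_def by auto
  have int: "Lv M A F (Suc k) \<inter> (Lv M A F k \<inter> E) = Lv M A F (Suc k) \<inter> E" for k
    unfolding Lv_def E_def F_def by auto
  have perk: "\<mu> (Lv M A (\<lambda>x. u x + v x) (Suc k)) + \<mu> (Lv M A F (Suc k) \<inter> E)
      \<le> \<mu> (Lv M A F (Suc k)) + \<mu> (Lv M A F k \<inter> E)" for k
    using sub LF E unfolding submodular_def un[symmetric] int[symmetric]
    by (metis (no_types, lifting) sets.Int add.commute)
  define S where "S = Ts M \<mu> A (\<lambda>x. u x + v x) N"
  define T where "T = Ts M \<mu> A F N"
  define C where "C = (\<Sum>k<n. \<mu> (Lv M A F (Suc k) \<inter> E))"
  have "S + (\<Sum>k<N. \<mu> (Lv M A F (Suc k) \<inter> E)) \<le> T + (\<Sum>k<N. \<mu> (Lv M A F k \<inter> E))"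
    unfolding S_def T_def Ts_def sum.distrib[symmetric] by (intro sum_mono perk)
  moreover have "(\<Sum>k<N. \<mu> (Lv M A F k \<inter> E)) = \<mu> E + C"
  proof -
    have "Lv M A F 0 \<inter> E = E" unfolding Lv_def E_def by auto
    then show ?thesis unfolding Suc C_def sum.lessThan_Suc_shift by simp
  qed
  moreover have "C \<le> (\<Sum>k<N. \<mu> (Lv M A F (Suc k) \<inter> E))"
    unfolding Suc C_def by simp
  ultimately have 1: "S + C \<le> T + \<mu> E + C"
    by (metis (no_types, lifting) add.assoc add_left_mono order_trans add.commute)
  have "C \<le> T"
  proof -
    have "C \<le> (\<Sum>k<n. \<mu> (Lv M A F (Suc k)))"
      unfolding C_def by (intro sum_mono mu_mono[OF mon] LF sets.Int E) auto
    also have "\<dots> \<le> T" unfolding T_def Ts_def Suc by simp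
    finally show ?thesis .
  qed
  show ?thesis
  proof (cases "C = \<infinity>")
    case True
    then have "T = \<infinity>" using \<open>C \<le> T\<close> by (simp add: top_unique)
    then show ?thesis by (simp add: F_def T_def)
  next
    case False
    then have "S \<le> T + \<mu> E" using 1 ennreal_add_left_cancel_le
      by (metis add.commute)
    then show ?thesis unfolding S_def T_def F_def E_def .
  qed
qed

definition cmn :: "'a measure \<Rightarrow> 'a set \<Rightarrow> ('a \<Rightarrow> nat) \<Rightarrow> ('a \<Rightarrow> nat) \<Rightarrow> bool" where
  "cmn M A u v \<longleftrightarrow> (\<forall>x\<in>A \<inter> space M. \<forall>y\<in>A \<inter> space M. u x < u y \<longrightarrow> v x \<le> v y)"

lemma step_super:
  assumes mon: "monotone_measure M \<mu>" and A: "A \<in> sets M"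
    and u: "nmeas M u" and v: "nmeas M v"
    and cond: "modular M \<mu> \<or> cmn M A u v"
    and bd: "\<forall>x. u x + v x \<le> N"
  shows "Ts M \<mu> A (\<lambda>x. u x + (v x - 1)) N + \<mu> (Lv M A v 1) \<le> Ts M \<mu> A (\<lambda>x. u x + v x) N"
proof (cases N)
  case 0
  then show ?thesis using bd by (auto simp add: Ts_def Lv_def mu_empty[OF mon])
next
  case (Suc n)
  define F where "F = (\<lambda>x. u x + (v x - 1))"
  define E where "E = Lv M A v 1"
  have F: "nmeas M F" unfolding F_def by (intro nmeas_add nmeas_minus1 u v)
  have E: "E \<in> sets M" unfolding E_def using A v by (rule Lv_sets)
  have LF: "Lv M A F k \<in> sets M" for k using A F by (rule Lv_sets)
  have un: "Lv M A F (Suc k) \<union> (Lv M A F k \<inter> E) = Lv M A (\<lambda>x. u x + v x) (Suc k)" for k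
    unfolding Lv_def E_def F_def by auto
  have int: "Lv M A F (Suc k) \<inter> (Lv M A F k \<inter> E) = Lv M A F (Suc k) \<inter> E" for k
    unfolding Lv_def E_def F_def by auto
  have perk: "\<mu> (Lv M A (\<lambda>x. u x + v x) (Suc k)) + \<mu> (Lv M A F (Suc k) \<inter> E)
      = \<mu> (Lv M A F (Suc k)) + \<mu> (Lv M A F k \<inter> E)" for k
  proof (cases "modular M \<mu>")
    case True
    have "\<mu> (Lv M A F (Suc k) \<inter> (Lv M A F k \<inter> E)) + \<mu> (Lv M A F (Suc k) \<union> (Lv M A F k \<inter> E))
       = \<mu> (Lv M A F (Suc k)) + \<mu> (Lv M A F k \<inter> E)"
      using True LF E unfolding modular_def by blast
    then show ?thesis unfolding un int by (simp add: add.commute)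
  next
    case False
    then have cm: "cmn M A u v" using cond by simp
    have nest: "Lv M A F (Suc k) \<subseteq> Lv M A F k \<inter> E \<or> Lv M A F k \<inter> E \<subseteq> Lv M A F (Suc k)"
    proof (rule ccontr)
      assume "\<not> ?thesis"
      then obtain x y where x: "x \<in> Lv M A F (Suc k)" "x \<notin> Lv M A F k \<inter> E"
        and y: "y \<in> Lv M A F k \<inter> E" "y \<notin> Lv M A F (Suc k)" by blast
      have "v x = 0" "Suc k \<le> u x" using x unfolding Lv_def E_def F_def by auto
      moreover have "1 \<le> v y" "u y \<le> k" using y unfolding Lv_def E_def F_def by auto
      moreover have "x \<in> A \<inter> space M" "y \<in> A \<inter> space M" using x y unfolding Lv_def by auto
      ultimately have "u y < u x" by linarith
      then have "v y \<le> v x" using cm \<open>x \<in> A \<inter> space M\<close> \<open>y \<in> A \<inter> space M\<close> unfolding cmn_def by blast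
      then show False using \<open>v x = 0\<close> \<open>1 \<le> v y\<close> by linarith
    qed
    have "\<mu> (Lv M A F (Suc k) \<union> (Lv M A F k \<inter> E)) + \<mu> (Lv M A F (Suc k) \<inter> (Lv M A F k \<inter> E))
       = \<mu> (Lv M A F (Suc k)) + \<mu> (Lv M A F k \<inter> E)"
      using nest
    proof
      assume "Lv M A F (Suc k) \<subseteq> Lv M A F k \<inter> E"
      then show ?thesis by (simp add: Int_absorb2 Un_absorb1 add.commute)
    next
      assume "Lv M A F k \<inter> E \<subseteq> Lv M A F (Suc k)"
      then show ?thesis by (simp add: Int_absorb1 Un_absorb2)
    qed
    then show ?thesis by (simp only: un int)
  qed
  define S where "S = Ts M \<mu> A (\<lambda>x. u x + v x) N"
  define T where "T = Ts M \<mu> A F N"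
  define C where "C = (\<Sum>k<n. \<mu> (Lv M A F (Suc k) \<inter> E))"
  have "S + (\<Sum>k<N. \<mu> (Lv M A F (Suc k) \<inter> E)) = T + (\<Sum>k<N. \<mu> (Lv M A F k \<inter> E))"
    unfolding S_def T_def Ts_def sum.distrib[symmetric] by (intro sum.cong perk refl)
  moreover have "(\<Sum>k<N. \<mu> (Lv M A F k \<inter> E)) = \<mu> E + C"
  proof -
    have "Lv M A F 0 \<inter> E = E" unfolding Lv_def E_def by auto
    then show ?thesis unfolding Suc C_def sum.lessThan_Suc_shift by simp
  qed
  moreover have "(\<Sum>k<N. \<mu> (Lv M A F (Suc k) \<inter> E)) = C"
  proof -
    have e: "Lv M A F (Suc n) \<inter> E = {}"
    proof (rule ccontr)
      assume "Lv M A F (Suc n) \<inter> E \<noteq> {}"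
      then obtain x where "Suc n \<le> u x + (v x - 1)" "Suc 0 \<le> v x" unfolding Lv_def E_def F_def by auto
      moreover have "u x + v x \<le> Suc n" using bd by (simp add: Suc)
      ultimately show False by linarith
    qed
    show ?thesis unfolding Suc C_def sum.lessThan_Suc using e by (simp add: mu_empty[OF mon])
  qed
  ultimately have 1: "S + C = T + \<mu> E + C"
    by (simp add: add.assoc)
  have "C \<le> T"
  proof -
    have "C \<le> (\<Sum>k<n. \<mu> (Lv M A F (Suc k)))"
      unfolding C_def by (intro sum_mono mu_mono[OF mon] LF sets.Int E) auto
    also have "\<dots> \<le> T" unfolding T_def Ts_def Suc by simp
    finally show ?thesis .
  qed
  have "T \<le> S"
    unfolding T_def S_def Ts_def
    by (intro sum_mono mu_mono[OF mon] LF Lv_sets[OF A] nmeas_add u v) (auto simp: Lv_def F_def)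
  show ?thesis
  proof (cases "C = \<infinity>")
    case True
    then have "S = \<infinity>" using \<open>C \<le> T\<close> \<open>T \<le> S\<close> by (simp add: top_unique)
    then show ?thesis by (simp add: S_def)
  next
    case False
    have "C + S = C + (T + \<mu> E)" using 1 by (metis add.commute)
    then have "S = T + \<mu> E" using False ennreal_add_left_cancel[of C S "T + \<mu> E"] by blast
    then have "T + \<mu> E \<le> S" by simp
    then show ?thesis unfolding S_def T_def F_def E_def .
  qed
qed

lemma Ts_shift: "Ts M \<mu> A (\<lambda>x. v x - 1) N + \<mu> (Lv M A v 1) = Ts M \<mu> A v (Suc N)"
proof -
  have "Lv M A (\<lambda>x. v x - 1) (Suc k) = Lv M A v (Suc (Suc k))" for k unfolding Lv_def by auto
  then show ?thesis unfolding Ts_def sum.lessThan_Suc_shift by (simp add: add.commute)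
qed

lemma Ts_Suc_bdd: "monotone_measure M \<mu> \<Longrightarrow> \<forall>x. v x \<le> N \<Longrightarrow> Ts M \<mu> A v (Suc N) = Ts M \<mu> A v N"
proof -
  assume mon: "monotone_measure M \<mu>" and b: "\<forall>x. v x \<le> N"
  have "Lv M A v (Suc N) = {}" unfolding Lv_def using b not_less_eq_eq by blast
  then show ?thesis unfolding Ts_def using mu_empty[OF mon] by simp
qed

lemma Ts_mono_N: "N \<le> N' \<Longrightarrow> Ts M \<mu> A v N \<le> Ts M \<mu> A v N'"
  unfolding Ts_def by (intro sum_mono2) auto

lemma Ts_mono_fun:
  assumes mon: "monotone_measure M \<mu>" and A: "A \<in> sets M" and "nmeas M u" "nmeas M v"
    and le: "\<forall>x\<in>space M. u x \<le> v x"
  shows "Ts M \<mu> A u N \<le> Ts M \<mu> A v N"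
  unfolding Ts_def
  by (intro sum_mono mu_mono[OF mon] Lv_sets[OF A] assms) (use le in \<open>auto simp: Lv_def\<close>)

lemma disc_sub_bdd:
  assumes mon: "monotone_measure M \<mu>" and sub: "submodular M \<mu>" and A: "A \<in> sets M"
  shows "\<forall>x. v x \<le> m \<Longrightarrow> m \<le> N \<Longrightarrow> nmeas M u \<Longrightarrow> nmeas M v \<Longrightarrow>
     Ts M \<mu> A (\<lambda>x. u x + v x) N \<le> Ts M \<mu> A u N + Ts M \<mu> A v N"
proof (induction m arbitrary: v)
  case 0
  then have "(\<lambda>x. u x + v x) = u" by auto
  then show ?case by simp
next
  case (Suc m)
  have v': "nmeas M (\<lambda>x. v x - 1)" using Suc.prems by (intro nmeas_minus1)
  have IH: "Ts M \<mu> A (\<lambda>x. u x + (v x - 1)) N \<le> Ts M \<mu> A u N + Ts M \<mu> A (\<lambda>x. v x - 1) N"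
  proof -
    have "\<forall>x. v x - 1 \<le> m" using Suc.prems(1) by (metis diff_Suc_1 diff_le_mono)
    then show ?thesis using Suc.IH[of "\<lambda>x. v x - 1"] Suc.prems v' by simp
  qed
  have "Ts M \<mu> A (\<lambda>x. u x + v x) N \<le> Ts M \<mu> A (\<lambda>x. u x + (v x - 1)) N + \<mu> (Lv M A v 1)"
    using step_sub[OF mon sub A] Suc.prems by blast
  also have "\<dots> \<le> Ts M \<mu> A u N + (Ts M \<mu> A (\<lambda>x. v x - 1) N + \<mu> (Lv M A v 1))"
    using IH by (metis add.assoc add_right_mono)
  also have "\<dots> = Ts M \<mu> A u N + Ts M \<mu> A v N"
  proof -
    have "\<forall>x. v x \<le> N" using Suc.prems(1,2) le_trans by blast
    then show ?thesis using Ts_shift[of M \<mu> A v N] Ts_Suc_bdd[OF mon, of v N A] by simp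
  qed
  finally show ?case .
qed

lemma cmn_minus1: "cmn M A u v \<Longrightarrow> cmn M A u (\<lambda>x. v x - 1)"
  unfolding cmn_def by (meson diff_le_mono)

lemma disc_super_bdd:
  assumes mon: "monotone_measure M \<mu>" and A: "A \<in> sets M"
  shows "\<forall>x. v x \<le> m \<Longrightarrow> \<forall>x. u x + v x \<le> N \<Longrightarrow> nmeas M u \<Longrightarrow> nmeas M v \<Longrightarrow>
     modular M \<mu> \<or> cmn M A u v \<Longrightarrow>
     Ts M \<mu> A u N + Ts M \<mu> A v N \<le> Ts M \<mu> A (\<lambda>x. u x + v x) N"
proof (induction m arbitrary: v)
  case 0
  then have "(\<lambda>x. u x + v x) = u" by auto
  moreover have "Ts M \<mu> A v N = 0" using 0 mu_empty[OF mon] unfolding Ts_def Lv_def by auto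
  ultimately show ?case by simp
next
  case (Suc m)
  have v': "nmeas M (\<lambda>x. v x - 1)" using Suc.prems by (intro nmeas_minus1)
  have c': "modular M \<mu> \<or> cmn M A u (\<lambda>x. v x - 1)" using Suc.prems cmn_minus1 by blast
  have b': "\<forall>x. u x + (v x - 1) \<le> N" using Suc.prems by (meson add_le_mono diff_le_self le_refl le_trans)
  have IH: "Ts M \<mu> A u N + Ts M \<mu> A (\<lambda>x. v x - 1) N \<le> Ts M \<mu> A (\<lambda>x. u x + (v x - 1)) N"
  proof -
    have "\<forall>x. v x - 1 \<le> m" using Suc.prems(1) by (metis diff_Suc_1 diff_le_mono)
    then show ?thesis using Suc.IH[of "\<lambda>x. v x - 1", OF _ b' Suc.prems(3) v' c'] by simp
  qed
  have "Ts M \<mu> A u N + Ts M \<mu> A v N \<le> Ts M \<mu> A u N + Ts M \<mu> A v (Suc N)"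
    by (intro add_left_mono Ts_mono_N) simp
  also have "\<dots> = (Ts M \<mu> A u N + Ts M \<mu> A (\<lambda>x. v x - 1) N) + \<mu> (Lv M A v 1)"
    using Ts_shift[of M \<mu> A v N] by (simp add: add.assoc)
  also have "\<dots> \<le> Ts M \<mu> A (\<lambda>x. u x + (v x - 1)) N + \<mu> (Lv M A v 1)"
    using IH by (rule add_right_mono)
  also have "\<dots> \<le> Ts M \<mu> A (\<lambda>x. u x + v x) N"
    using step_super[OF mon A Suc.prems(3,4,5,2)] .
  finally show ?case .
qed

definition Tinf :: "'a measure \<Rightarrow> ('a set \<Rightarrow> ennreal) \<Rightarrow> 'a set \<Rightarrow> ('a \<Rightarrow> nat) \<Rightarrow> ennreal" where
  "Tinf M \<mu> A u = (\<Sum>k. \<mu> (Lv M A u (Suc k)))"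

lemma Tinf_SUP: "Tinf M \<mu> A u = (SUP N. Ts M \<mu> A u N)"
  unfolding Tinf_def Ts_def by (rule suminf_eq_SUP)

lemma Ts_le_Tinf: "Ts M \<mu> A u N \<le> Tinf M \<mu> A u"
  unfolding Tinf_SUP by (rule SUP_upper) auto

lemma Ts_min: "Ts M \<mu> A (\<lambda>x. min (u x) N) N = Ts M \<mu> A u N"
proof -
  have "Lv M A (\<lambda>x. min (u x) N) (Suc k) = Lv M A u (Suc k)" if "k < N" for k
    using that unfolding Lv_def by auto
  then show ?thesis unfolding Ts_def by (intro sum.cong) auto
qed

lemma disc_sub:
  assumes mon: "monotone_measure M \<mu>" and sub: "submodular M \<mu>" and A: "A \<in> sets M"
    and u: "nmeas M u" and v: "nmeas M v"
  shows "Tinf M \<mu> A (\<lambda>x. u x + v x) \<le> Tinf M \<mu> A u + Tinf M \<mu> A v"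
  unfolding Tinf_SUP[of M \<mu> A "\<lambda>x. u x + v x"]
proof (rule SUP_least)
  fix N
  have "Lv M A (\<lambda>x. u x + v x) (Suc k) = Lv M A (\<lambda>x. min (u x) N + min (v x) N) (Suc k)" if "k < N" for k
    using that unfolding Lv_def by auto
  then have "Ts M \<mu> A (\<lambda>x. u x + v x) N = Ts M \<mu> A (\<lambda>x. min (u x) N + min (v x) N) N"
    unfolding Ts_def by (intro sum.cong) auto
  also have "\<dots> \<le> Ts M \<mu> A (\<lambda>x. min (u x) N) N + Ts M \<mu> A (\<lambda>x. min (v x) N) N"
    by (rule disc_sub_bdd[OF mon sub A, of _ N]) (auto intro: nmeas_min u v)
  also have "\<dots> = Ts M \<mu> A u N + Ts M \<mu> A v N" by (simp add: Ts_min)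
  also have "\<dots> \<le> Tinf M \<mu> A u + Tinf M \<mu> A v" by (intro add_mono Ts_le_Tinf)
  finally show "Ts M \<mu> A (\<lambda>x. u x + v x) N \<le> Tinf M \<mu> A u + Tinf M \<mu> A v" .
qed

lemma cmn_min: "cmn M A u v \<Longrightarrow> cmn M A (\<lambda>x. min (u x) N) (\<lambda>x. min (v x) N)"
  unfolding cmn_def
proof (intro ballI impI)
  fix x y assume c: "\<forall>x\<in>A \<inter> space M. \<forall>y\<in>A \<inter> space M. u x < u y \<longrightarrow> v x \<le> v y"
    and xy: "x \<in> A \<inter> space M" "y \<in> A \<inter> space M" and l: "min (u x) N < min (u y) N"
  from l have "u x < u y" by (simp add: min_def split: if_splits)
  then have "v x \<le> v y" using c xy by blast
  then show "min (v x) N \<le> min (v y) N" by (rule min.mono) simp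
qed

lemma disc_super:
  assumes mon: "monotone_measure M \<mu>" and A: "A \<in> sets M"
    and u: "nmeas M u" and v: "nmeas M v" and cond: "modular M \<mu> \<or> cmn M A u v"
  shows "Tinf M \<mu> A u + Tinf M \<mu> A v \<le> Tinf M \<mu> A (\<lambda>x. u x + v x)"
proof -
  have inc: "incseq (Ts M \<mu> A w)" for w by (intro monoI Ts_mono_N)
  have "Tinf M \<mu> A u + Tinf M \<mu> A v = (SUP N. Ts M \<mu> A u N + Ts M \<mu> A v N)"
    unfolding Tinf_SUP by (rule ennreal_SUP_add[symmetric, OF inc inc])
  also have "\<dots> \<le> Tinf M \<mu> A (\<lambda>x. u x + v x)"
  proof (rule SUP_least)
    fix N
    have c: "modular M \<mu> \<or> cmn M A (\<lambda>x. min (u x) N) (\<lambda>x. min (v x) N)"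
    proof (cases "modular M \<mu>")
      case False
      then have "cmn M A u v" using cond by simp
      then show ?thesis by (simp add: cmn_min)
    qed simp
    have "Ts M \<mu> A u N + Ts M \<mu> A v N = Ts M \<mu> A (\<lambda>x. min (u x) N) N + Ts M \<mu> A (\<lambda>x. min (v x) N) N"
      by (simp add: Ts_min)
    also have "\<dots> \<le> Ts M \<mu> A (\<lambda>x. min (u x) N) (N + N) + Ts M \<mu> A (\<lambda>x. min (v x) N) (N + N)"
      by (intro add_mono Ts_mono_N) auto
    also have "\<dots> \<le> Ts M \<mu> A (\<lambda>x. min (u x) N + min (v x) N) (N + N)"
      by (rule disc_super_bdd[OF mon A _ _ nmeas_min[OF u] nmeas_min[OF v] c, of N]) auto
    also have "\<dots> \<le> Ts M \<mu> A (\<lambda>x. u x + v x) (N + N)"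
      by (intro Ts_mono_fun[OF mon A] nmeas_add nmeas_min u v) auto
    also have "\<dots> \<le> Tinf M \<mu> A (\<lambda>x. u x + v x)" by (rule Ts_le_Tinf)
    finally show "Ts M \<mu> A u N + Ts M \<mu> A v N \<le> Tinf M \<mu> A (\<lambda>x. u x + v x)" .
  qed
  finally show ?thesis .
qed

lemma antimono_borel:
  fixes G :: "real \<Rightarrow> ennreal"
  assumes am: "\<And>s t. s \<le> t \<Longrightarrow> G t \<le> G s"
  shows "G \<in> borel_measurable borel"
proof (rule borel_measurableI_greater)
  fix y
  have "is_interval {x. y < G x}"
    unfolding is_interval_1
  proof (intro ballI allI impI)
    fix a b x assume "a \<in> {x. y < G x}" "b \<in> {x. y < G x}" "a \<le> x \<and> x \<le> b"
    then show "x \<in> {x. y < G x}" using am[of x b] by auto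
  qed
  then show "{x \<in> space borel. y < G x} \<in> sets borel"
    using real_interval_borel_measurable by simp
qed

lemma idx_iff:
  fixes y :: real
  assumes "0 \<le> y"
  shows "(real k \<le> y \<and> y < real k + 1) \<longleftrightarrow> k = nat \<lfloor>y\<rfloor>"
proof
  assume "real k \<le> y \<and> y < real k + 1"
  then have "\<lfloor>y\<rfloor> = int k" by (simp add: floor_eq_iff)
  then show "k = nat \<lfloor>y\<rfloor>" by simp
next
  assume "k = nat \<lfloor>y\<rfloor>"
  then have "int k = \<lfloor>y\<rfloor>" using assms by simp
  then have "real k = real_of_int \<lfloor>y\<rfloor>" by (metis of_int_of_nat_eq)
  moreover have "real_of_int \<lfloor>y\<rfloor> \<le> y" "y < real_of_int \<lfloor>y\<rfloor> + 1" by linarith+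
  ultimately show "real k \<le> y \<and> y < real k + 1" by simp
qed

lemma interval_idx:
  fixes t r \<delta> :: real
  assumes d: "\<delta> > 0" and t: "r \<le> t"
  shows "t \<in> {r + real k * \<delta> ..< r + real (Suc k) * \<delta>} \<longleftrightarrow> k = nat \<lfloor>(t - r) / \<delta>\<rfloor>"
proof -
  have "t \<in> {r + real k * \<delta> ..< r + real (Suc k) * \<delta>} \<longleftrightarrow> (real k \<le> (t - r) / \<delta> \<and> (t - r) / \<delta> < real k + 1)"
    using d by (auto simp: pos_le_divide_eq pos_divide_less_eq algebra_simps)
  also have "\<dots> \<longleftrightarrow> k = nat \<lfloor>(t - r) / \<delta>\<rfloor>"
    using d t by (intro idx_iff) simp
  finally show ?thesis .
qed

lemma suminf_single_ind:
  fixes a :: "nat \<Rightarrow> ennreal"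
  assumes "\<And>k. t \<in> I k \<longleftrightarrow> k = k0"
  shows "(\<Sum>k. indicator (I k) t * a k) = a k0"
proof -
  have "(\<lambda>k. indicator (I k) t * a k) = (\<lambda>k. if k = k0 then a k else 0)"
    using assms by (auto simp: indicator_def)
  then show ?thesis using sums_single[of k0 a] sums_unique by metis
qed

lemma riem_sum_integral:
  fixes G :: "real \<Rightarrow> ennreal" and \<delta> r :: real and c :: "nat \<Rightarrow> ennreal"
  assumes d: "\<delta> > 0"
  shows "(\<integral>\<^sup>+t. (\<Sum>k. indicator {r + real k * \<delta> ..< r + real (Suc k) * \<delta>} t * c k) \<partial>lborel)
     = (\<Sum>k. ennreal \<delta> * c k)"
proof -
  have "(\<integral>\<^sup>+t. (\<Sum>k. indicator {r + real k * \<delta> ..< r + real (Suc k) * \<delta>} t * c k) \<partial>lborel)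
     = (\<Sum>k. \<integral>\<^sup>+t. indicator {r + real k * \<delta> ..< r + real (Suc k) * \<delta>} t * c k \<partial>lborel)"
    by (rule nn_integral_suminf) simp
  also have "\<dots> = (\<Sum>k. ennreal \<delta> * c k)"
  proof (rule suminf_cong)
    fix k
    have "(\<integral>\<^sup>+t. indicator {r + real k * \<delta> ..< r + real (Suc k) * \<delta>} t * c k \<partial>lborel)
       = (\<integral>\<^sup>+t. c k * indicator {r + real k * \<delta> ..< r + real (Suc k) * \<delta>} t \<partial>lborel)"
      by (simp add: mult.commute)
    also have "\<dots> = c k * emeasure lborel {r + real k * \<delta> ..< r + real (Suc k) * \<delta>}"
      by (rule nn_integral_cmult_indicator) simp
    also have "\<dots> = c k * ennreal \<delta>"
      using d by (simp add: algebra_simps)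
    finally show "(\<integral>\<^sup>+t. indicator {r + real k * \<delta> ..< r + real (Suc k) * \<delta>} t * c k \<partial>lborel) = ennreal \<delta> * c k"
      by (simp add: mult.commute)
  qed
  finally show ?thesis .
qed

lemma riem_lower:
  fixes G :: "real \<Rightarrow> ennreal"
  assumes am: "\<And>s t. s \<le> t \<Longrightarrow> G t \<le> G s" and d: "\<delta> > 0"
  shows "(\<Sum>k. ennreal \<delta> * G (real (Suc k) * \<delta>)) \<le> (\<integral>\<^sup>+t. indicator {0..} t * G t \<partial>lborel)"
proof -
  have "(\<Sum>k. ennreal \<delta> * G (real (Suc k) * \<delta>))
      = (\<integral>\<^sup>+t. (\<Sum>k. indicator {0 + real k * \<delta> ..< 0 + real (Suc k) * \<delta>} t * G (real (Suc k) * \<delta>)) \<partial>lborel)"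
    by (rule riem_sum_integral[symmetric, OF d])
  also have "\<dots> \<le> (\<integral>\<^sup>+t. indicator {0..} t * G t \<partial>lborel)"
  proof (rule nn_integral_mono)
    fix t :: real
    show "(\<Sum>k. indicator {0 + real k * \<delta> ..< 0 + real (Suc k) * \<delta>} t * G (real (Suc k) * \<delta>)) \<le> indicator {0..} t * G t"
    proof (cases "t \<ge> 0")
      case True
      define k0 where "k0 = nat \<lfloor>(t - 0) / \<delta>\<rfloor>"
      have "(\<Sum>k. indicator {0 + real k * \<delta> ..< 0 + real (Suc k) * \<delta>} t * G (real (Suc k) * \<delta>)) = G (real (Suc k0) * \<delta>)"
        by (rule suminf_single_ind) (use interval_idx[OF d True] in \<open>simp add: k0_def\<close>)
      also have "\<dots> \<le> G t"
      proof (rule am)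
        have "t \<in> {0 + real k0 * \<delta> ..< 0 + real (Suc k0) * \<delta>}"
          using interval_idx[OF d True, of k0] by (simp add: k0_def)
        then show "t \<le> real (Suc k0) * \<delta>" by simp
      qed
      finally show ?thesis using True by simp
    next
      case False
      have "indicator {0 + real k * \<delta> ..< 0 + real (Suc k) * \<delta>} t = (0::ennreal)" for k
      proof -
        have "0 \<le> real k * \<delta>" using d by simp
        then show ?thesis using False by (auto simp: indicator_def)
      qed
      then show ?thesis by simp
    qed
  qed
  finally show ?thesis .
qed

lemma riem_upper:
  fixes G :: "real \<Rightarrow> ennreal"
  assumes am: "\<And>s t. s \<le> t \<Longrightarrow> G t \<le> G s" and d: "\<delta> > 0"
  shows "(\<integral>\<^sup>+t. indicator {r..} t * G t \<partial>lborel) \<le> (\<Sum>k. ennreal \<delta> * G (r + real k * \<delta>))"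
proof -
  have "(\<integral>\<^sup>+t. indicator {r..} t * G t \<partial>lborel)
     \<le> (\<integral>\<^sup>+t. (\<Sum>k. indicator {r + real k * \<delta> ..< r + real (Suc k) * \<delta>} t * G (r + real k * \<delta>)) \<partial>lborel)"
  proof (rule nn_integral_mono)
    fix t :: real
    show "indicator {r..} t * G t \<le> (\<Sum>k. indicator {r + real k * \<delta> ..< r + real (Suc k) * \<delta>} t * G (r + real k * \<delta>))"
    proof (cases "t \<ge> r")
      case True
      define k0 where "k0 = nat \<lfloor>(t - r) / \<delta>\<rfloor>"
      have "(\<Sum>k. indicator {r + real k * \<delta> ..< r + real (Suc k) * \<delta>} t * G (r + real k * \<delta>)) = G (r + real k0 * \<delta>)"
        by (rule suminf_single_ind) (use interval_idx[OF d True] in \<open>simp add: k0_def\<close>)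
      moreover have "G t \<le> G (r + real k0 * \<delta>)"
      proof (rule am)
        have "t \<in> {r + real k0 * \<delta> ..< r + real (Suc k0) * \<delta>}"
          using interval_idx[OF d True, of k0] by (simp add: k0_def)
        then show "r + real k0 * \<delta> \<le> t" by simp
      qed
      ultimately show ?thesis using True by simp
    next
      case False
      then show ?thesis by simp
    qed
  qed
  also have "\<dots> = (\<Sum>k. ennreal \<delta> * G (r + real k * \<delta>))"
    by (rule riem_sum_integral[OF d])
  finally show ?thesis .
qed

lemma riem_SUP:
  fixes G :: "real \<Rightarrow> ennreal"
  assumes am: "\<And>s t. s \<le> t \<Longrightarrow> G t \<le> G s" and c: "c > 0"
  shows "(\<integral>\<^sup>+t. indicator {0..} t * G t \<partial>lborel) = (SUP n. \<integral>\<^sup>+t. indicator {c / real (Suc n)..} t * G t \<partial>lborel)"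
proof -
  have Gm: "G \<in> borel_measurable borel" using am by (rule antimono_borel)
  have inc: "incseq (\<lambda>n t. indicator {c / real (Suc n)..} t * G t)"
  proof (intro monoI le_funI)
    fix m n :: nat and t assume "m \<le> n"
    then have "c / real (Suc n) \<le> c / real (Suc m)" using c
      by (intro divide_left_mono) auto
    then show "indicator {c / real (Suc m)..} t * G t \<le> indicator {c / real (Suc n)..} t * G t"
      by (auto simp: indicator_def)
  qed
  have sup: "(SUP n. indicator {c / real (Suc n)..} t * G t) = indicator {0<..} t * G t" for t
  proof (rule antisym)
    show "(SUP n. indicator {c / real (Suc n)..} t * G t) \<le> indicator {0<..} t * G t"
    proof (rule SUP_least)
      fix n
      have "0 < c / real (Suc n)" using c by simp
      then show "indicator {c / real (Suc n)..} t * G t \<le> indicator {0<..} t * G t"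
        by (auto simp: indicator_def)
    qed
  next
    show "indicator {0<..} t * G t \<le> (SUP n. indicator {c / real (Suc n)..} t * G t)"
    proof (cases "t > 0")
      case True
      obtain n :: nat where n: "c / t < real n" using reals_Archimedean2 by blast
      then have "c < t * real n" using True by (simp add: pos_divide_less_eq mult.commute)
      moreover have "t * real n \<le> t * real (Suc n)" using True by simp
      ultimately have "c \<le> real (Suc n) * t" by (simp add: mult.commute)
      then have "c / real (Suc n) \<le> t" by (simp add: divide_le_eq mult.commute)
      then have "indicator {0<..} t * G t = indicator {c / real (Suc n)..} t * G t"
        using True by (simp add: indicator_def)
      also have "\<dots> \<le> (SUP n. indicator {c / real (Suc n)..} t * G t)" by (rule SUP_upper) simp
      finally show ?thesis .
    next
      case False
      then show ?thesis by simp
    qed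
  qed
  have "(\<integral>\<^sup>+t. indicator {0..} t * G t \<partial>lborel) = (\<integral>\<^sup>+t. indicator {0<..} t * G t \<partial>lborel)"
    by (rule nn_integral_cong_AE) (use AE_lborel_singleton[of 0] in \<open>eventually_elim, auto simp: indicator_def\<close>)
  also have "\<dots> = (\<integral>\<^sup>+t. (SUP n. indicator {c / real (Suc n)..} t * G t) \<partial>lborel)"
    by (simp only: sup)
  also have "\<dots> = (SUP n. \<integral>\<^sup>+t. indicator {c / real (Suc n)..} t * G t \<partial>lborel)"
    by (rule nn_integral_monotone_convergence_SUP[OF inc]) (use Gm in measurable)
  finally show ?thesis .
qed

definition cq :: "'a measure \<Rightarrow> ('a set \<Rightarrow> ennreal) \<Rightarrow> 'a set \<Rightarrow> ('a \<Rightarrow> real) \<Rightarrow> ennreal" where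
  "cq M \<mu> A F = (\<integral>\<^sup>+t. indicator {0..} t * \<mu> (A \<inter> {x\<in>space M. t \<le> F x}) \<partial>lborel)"

lemma lev_sets: "(F::'a \<Rightarrow> real) \<in> borel_measurable M \<Longrightarrow> {x\<in>space M. t \<le> F x} \<in> sets M"
  by measurable

lemma nat_floor_gt: "0 \<le> (y::real) \<Longrightarrow> y < real (nat \<lfloor>y\<rfloor>) + 1"
proof -
  assume "0 \<le> y"
  then have "real (nat \<lfloor>y\<rfloor>) = real_of_int \<lfloor>y\<rfloor>" by simp
  then show ?thesis by linarith
qed

lemma lev_setsA: "A \<in> sets M \<Longrightarrow> (F::'a \<Rightarrow> real) \<in> borel_measurable M \<Longrightarrow> A \<inter> {x\<in>space M. t \<le> F x} \<in> sets M"
  using lev_sets by blast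

lemma G_am:
  fixes F :: "'a \<Rightarrow> real"
  assumes mon: "monotone_measure M \<mu>" and A: "A \<in> sets M" and F: "F \<in> borel_measurable M"
  shows "s \<le> t \<Longrightarrow> \<mu> (A \<inter> {x\<in>space M. t \<le> F x}) \<le> \<mu> (A \<inter> {x\<in>space M. s \<le> F x})"
  by (rule mu_mono[OF mon]) (use A F lev_setsA in auto)

definition nd :: "real \<Rightarrow> ('a \<Rightarrow> real) \<Rightarrow> 'a \<Rightarrow> nat" where
  "nd \<delta> F x = nat \<lfloor>F x / \<delta>\<rfloor>"

lemma nd_level:
  assumes d: "\<delta> > 0" and "F x \<ge> 0"
  shows "j \<le> nd \<delta> F x \<longleftrightarrow> real j * \<delta> \<le> F x"
proof -
  have "0 \<le> \<lfloor>F x / \<delta>\<rfloor>" using assms by simp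
  then have "j \<le> nd \<delta> F x \<longleftrightarrow> int j \<le> \<lfloor>F x / \<delta>\<rfloor>" unfolding nd_def by (simp add: le_nat_iff)
  also have "\<dots> \<longleftrightarrow> real j \<le> F x / \<delta>" by (simp add: le_floor_iff)
  also have "\<dots> \<longleftrightarrow> real j * \<delta> \<le> F x" using d by (simp add: pos_le_divide_eq)
  finally show ?thesis .
qed

lemma nd_set:
  assumes d: "\<delta> > 0" and F0: "\<forall>x\<in>space M. F x \<ge> 0"
  shows "{x\<in>space M. j \<le> nd \<delta> F x} = {x\<in>space M. real j * \<delta> \<le> F x}"
proof (rule set_eqI)
  fix x show "x \<in> {x\<in>space M. j \<le> nd \<delta> F x} \<longleftrightarrow> x \<in> {x\<in>space M. real j * \<delta> \<le> F x}"
    using nd_level[OF d, of F x j] F0 by auto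
qed

lemma nd_nmeas:
  assumes d: "\<delta> > 0" and F0: "\<forall>x\<in>space M. F x \<ge> 0" and F: "F \<in> borel_measurable M"
  shows "nmeas M (nd \<delta> F)"
  unfolding nmeas_def nd_set[OF d F0] using F lev_sets by blast

lemma Tinf_nd:
  assumes d: "\<delta> > 0" and F0: "\<forall>x\<in>space M. F x \<ge> 0"
  shows "Tinf M \<mu> A (nd \<delta> F) = (\<Sum>k. \<mu> (A \<inter> {x\<in>space M. real (Suc k) * \<delta> \<le> F x}))"
  unfolding Tinf_def Lv_def nd_set[OF d F0] ..

lemma cq_lower:
  assumes mon: "monotone_measure M \<mu>" and A: "A \<in> sets M" and F: "F \<in> borel_measurable M"
    and F0: "\<forall>x\<in>space M. F x \<ge> 0" and d: "\<delta> > 0"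
  shows "ennreal \<delta> * Tinf M \<mu> A (nd \<delta> F) \<le> cq M \<mu> A F"
  unfolding Tinf_nd[OF d F0] cq_def ennreal_suminf_cmult[symmetric]
  by (rule riem_lower[OF G_am[OF mon A F] d])

lemma cq_SUP:
  assumes mon: "monotone_measure M \<mu>" and A: "A \<in> sets M" and F: "F \<in> borel_measurable M"
    and c: "c > 0"
  shows "cq M \<mu> A F = (SUP n. \<integral>\<^sup>+t. indicator {c / real (Suc n)..} t * \<mu> (A \<inter> {x\<in>space M. t \<le> F x}) \<partial>lborel)"
  unfolding cq_def by (rule riem_SUP[OF G_am[OF mon A F] c])

lemma cq_sub:
  assumes mon: "monotone_measure M \<mu>" and sub: "submodular M \<mu>" and A: "A \<in> sets M"
    and F: "F \<in> borel_measurable M" and F0: "\<forall>x\<in>space M. F x \<ge> 0"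
    and H: "H \<in> borel_measurable M" and H0: "\<forall>x\<in>space M. H x \<ge> 0"
  shows "cq M \<mu> A (\<lambda>x. F x + H x) \<le> cq M \<mu> A F + cq M \<mu> A H"
proof -
  have FH: "(\<lambda>x. F x + H x) \<in> borel_measurable M" using F H by measurable
  have eq: "cq M \<mu> A (\<lambda>x. F x + H x) = (SUP n. \<integral>\<^sup>+t. indicator {2 / real (Suc n)..} t * \<mu> (A \<inter> {x\<in>space M. t \<le> F x + H x}) \<partial>lborel)"
    by (rule cq_SUP[OF mon A FH]) simp
  show ?thesis
    unfolding eq
  proof (rule SUP_least)
    fix n
    define \<delta> where "\<delta> = 1 / real (Suc n)"
    have d: "\<delta> > 0" unfolding \<delta>_def by simp
    have r: "2 / real (Suc n) = 2 * \<delta>" unfolding \<delta>_def by simp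
    have "(\<integral>\<^sup>+t. indicator {2 / real (Suc n)..} t * \<mu> (A \<inter> {x\<in>space M. t \<le> F x + H x}) \<partial>lborel)
      \<le> (\<Sum>k. ennreal \<delta> * \<mu> (A \<inter> {x\<in>space M. 2 * \<delta> + real k * \<delta> \<le> F x + H x}))"
      unfolding r by (rule riem_upper[OF G_am[OF mon A FH] d])
    also have "\<dots> \<le> (\<Sum>k. ennreal \<delta> * \<mu> (Lv M A (\<lambda>x. nd \<delta> F x + nd \<delta> H x) (Suc k)))"
    proof (intro suminf_le mult_left_mono mu_mono[OF mon] summableI)
      fix k
      show "A \<inter> {x\<in>space M. 2 * \<delta> + real k * \<delta> \<le> F x + H x} \<in> sets M" using A FH by measurable
      show "Lv M A (\<lambda>x. nd \<delta> F x + nd \<delta> H x) (Suc k) \<in> sets M"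
        by (intro Lv_sets A nmeas_add nd_nmeas d F0 H0 F H)
      show "A \<inter> {x\<in>space M. 2 * \<delta> + real k * \<delta> \<le> F x + H x} \<subseteq> Lv M A (\<lambda>x. nd \<delta> F x + nd \<delta> H x) (Suc k)"
      proof
        fix x assume x: "x \<in> A \<inter> {x\<in>space M. 2 * \<delta> + real k * \<delta> \<le> F x + H x}"
        have "F x / \<delta> < real (nd \<delta> F x) + 1" "H x / \<delta> < real (nd \<delta> H x) + 1"
          using x F0 H0 d unfolding nd_def by (auto intro!: nat_floor_gt)
        moreover have "2 + real k \<le> (F x + H x) / \<delta>"
          using x d by (simp add: pos_le_divide_eq algebra_simps)
        ultimately have "real k < real (nd \<delta> F x + nd \<delta> H x)" by (simp add: add_divide_distrib)
        then show "x \<in> Lv M A (\<lambda>x. nd \<delta> F x + nd \<delta> H x) (Suc k)" using x unfolding Lv_def by auto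
      qed
    qed simp
    also have "\<dots> = ennreal \<delta> * Tinf M \<mu> A (\<lambda>x. nd \<delta> F x + nd \<delta> H x)"
      unfolding Tinf_def by simp
    also have "\<dots> \<le> ennreal \<delta> * (Tinf M \<mu> A (nd \<delta> F) + Tinf M \<mu> A (nd \<delta> H))"
      by (intro mult_left_mono disc_sub[OF mon sub A] nd_nmeas d F0 H0 F H) simp
    also have "\<dots> \<le> cq M \<mu> A F + cq M \<mu> A H"
      unfolding distrib_left by (intro add_mono cq_lower[OF mon A] d F0 H0 F H)
    finally show "(\<integral>\<^sup>+t. indicator {2 / real (Suc n)..} t * \<mu> (A \<inter> {x\<in>space M. t \<le> F x + H x}) \<partial>lborel)
      \<le> cq M \<mu> A F + cq M \<mu> A H" .
  qed
qed

lemma nd_le: "\<delta> > 0 \<Longrightarrow> 0 \<le> F x \<Longrightarrow> real (nd \<delta> F x) * \<delta> \<le> F x"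
  using nd_level[of \<delta> F x "nd \<delta> F x"] by simp

lemma nd_mono: "\<delta> > 0 \<Longrightarrow> F y \<le> F x \<Longrightarrow> nd \<delta> F y \<le> nd \<delta> F x"
  unfolding nd_def by (intro nat_mono floor_mono divide_right_mono) auto

lemma cmn_nd:
  assumes d: "\<delta> > 0" and c: "comonotone (space M) F H"
  shows "cmn M A (nd \<delta> F) (nd \<delta> H)"
  unfolding cmn_def
proof (intro ballI impI)
  fix x y assume x: "x \<in> A \<inter> space M" and y: "y \<in> A \<inter> space M" and l: "nd \<delta> F x < nd \<delta> F y"
  have "F x < F y"
  proof (rule ccontr)
    assume "\<not> F x < F y"
    then have "nd \<delta> F y \<le> nd \<delta> F x" using d by (intro nd_mono) auto
    then show False using l by simp
  qed
  moreover have "(F x - F y) * (H x - H y) \<ge> 0" using c x y unfolding comonotone_def by auto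
  ultimately have "H x \<le> H y" by (smt (verit) mult_neg_pos)
  then show "nd \<delta> H x \<le> nd \<delta> H y" using d by (intro nd_mono)
qed

lemma cq_super:
  assumes mon: "monotone_measure M \<mu>" and A: "A \<in> sets M"
    and F: "F \<in> borel_measurable M" and F0: "\<forall>x\<in>space M. F x \<ge> 0"
    and H: "H \<in> borel_measurable M" and H0: "\<forall>x\<in>space M. H x \<ge> 0"
    and cond: "modular M \<mu> \<or> comonotone (space M) F H"
  shows "cq M \<mu> A F + cq M \<mu> A H \<le> cq M \<mu> A (\<lambda>x. F x + H x)"
proof -
  have FH: "(\<lambda>x. F x + H x) \<in> borel_measurable M" using F H by measurable
  define I where "I W n = (\<integral>\<^sup>+t. indicator {1 / real (Suc n)..} t * \<mu> (A \<inter> {x\<in>space M. t \<le> W x}) \<partial>lborel)"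
    for W :: "'a \<Rightarrow> real" and n
  have eq: "cq M \<mu> A W = (SUP n. I W n)" if "W \<in> borel_measurable M" for W
    unfolding I_def by (rule cq_SUP[OF mon A that]) simp
  have inc: "incseq (I W)" for W
  proof (intro monoI)
    fix m n :: nat assume "m \<le> n"
    then have "1 / real (Suc n) \<le> 1 / real (Suc m)" by (intro divide_left_mono) auto
    then show "I W m \<le> I W n" unfolding I_def
      by (intro nn_integral_mono mult_right_mono) (auto simp: indicator_def)
  qed
  have "cq M \<mu> A F + cq M \<mu> A H = (SUP n. I F n + I H n)"
    unfolding eq[OF F] eq[OF H] by (rule ennreal_SUP_add[symmetric, OF inc inc])
  also have "\<dots> \<le> cq M \<mu> A (\<lambda>x. F x + H x)"
  proof (rule SUP_least)
    fix n
    define \<delta> where "\<delta> = 1 / real (Suc n)"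
    have d: "\<delta> > 0" unfolding \<delta>_def by simp
    have up: "I W n \<le> ennreal \<delta> * Tinf M \<mu> A (nd \<delta> W)"
      if W: "W \<in> borel_measurable M" "\<forall>x\<in>space M. W x \<ge> 0" for W
    proof -
      have "I W n \<le> (\<Sum>k. ennreal \<delta> * \<mu> (A \<inter> {x\<in>space M. \<delta> + real k * \<delta> \<le> W x}))"
        unfolding I_def \<delta>_def[symmetric] by (rule riem_upper[OF G_am[OF mon A W(1)] d])
      also have "\<dots> = ennreal \<delta> * Tinf M \<mu> A (nd \<delta> W)"
        unfolding Tinf_nd[OF d W(2)] ennreal_suminf_cmult[symmetric]
        by (simp add: algebra_simps)
      finally show ?thesis .
    qed
    have c: "modular M \<mu> \<or> cmn M A (nd \<delta> F) (nd \<delta> H)"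
      using cond cmn_nd[OF d, of M F H A] by blast
    have "I F n + I H n \<le> ennreal \<delta> * (Tinf M \<mu> A (nd \<delta> F) + Tinf M \<mu> A (nd \<delta> H))"
      unfolding distrib_left by (intro add_mono up F F0 H H0)
    also have "\<dots> \<le> ennreal \<delta> * Tinf M \<mu> A (\<lambda>x. nd \<delta> F x + nd \<delta> H x)"
      by (intro mult_left_mono disc_super[OF mon A] nd_nmeas d F0 H0 F H c) simp
    also have "\<dots> \<le> ennreal \<delta> * (\<Sum>k. \<mu> (A \<inter> {x\<in>space M. real (Suc k) * \<delta> \<le> F x + H x}))"
      unfolding Tinf_def
    proof (intro mult_left_mono suminf_le mu_mono[OF mon] summableI)
      fix k
      show "Lv M A (\<lambda>x. nd \<delta> F x + nd \<delta> H x) (Suc k) \<in> sets M"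
        by (intro Lv_sets A nmeas_add nd_nmeas d F0 H0 F H)
      show "A \<inter> {x\<in>space M. real (Suc k) * \<delta> \<le> F x + H x} \<in> sets M" using A FH by measurable
      show "Lv M A (\<lambda>x. nd \<delta> F x + nd \<delta> H x) (Suc k) \<subseteq> A \<inter> {x\<in>space M. real (Suc k) * \<delta> \<le> F x + H x}"
      proof
        fix x assume x: "x \<in> Lv M A (\<lambda>x. nd \<delta> F x + nd \<delta> H x) (Suc k)"
        then have xs: "x \<in> space M" "x \<in> A" and kk: "Suc k \<le> nd \<delta> F x + nd \<delta> H x" unfolding Lv_def by auto
        have "real (Suc k) * \<delta> \<le> real (nd \<delta> F x + nd \<delta> H x) * \<delta>"
          using kk d by (intro mult_right_mono) auto
        also have "\<dots> = real (nd \<delta> F x) * \<delta> + real (nd \<delta> H x) * \<delta>" by (simp add: algebra_simps)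
        also have "\<dots> \<le> F x + H x" using nd_le[OF d, of F x] nd_le[OF d, of H x] F0 H0 xs by auto
        finally show "x \<in> A \<inter> {x\<in>space M. real (Suc k) * \<delta> \<le> F x + H x}" using xs by auto
      qed
    qed simp
    also have "\<dots> \<le> cq M \<mu> A (\<lambda>x. F x + H x)"
      unfolding ennreal_suminf_cmult[symmetric] cq_def
      by (rule riem_lower[OF G_am[OF mon A FH] d])
    finally show "I F n + I H n \<le> cq M \<mu> A (\<lambda>x. F x + H x)" .
  qed
  finally show ?thesis .
qed

lemma cq_mono:
  assumes mon: "monotone_measure M \<mu>" and A: "A \<in> sets M"
    and F: "F \<in> borel_measurable M" and H: "H \<in> borel_measurable M"
    and le: "\<forall>x\<in>space M. F x \<le> H x"
  shows "cq M \<mu> A F \<le> cq M \<mu> A H"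
  unfolding cq_def
  by (intro nn_integral_mono mult_left_mono mu_mono[OF mon] lev_setsA A F H) (use le in auto)

lemma cq_cmult:
  assumes mon: "monotone_measure M \<mu>" and A: "A \<in> sets M"
    and F: "F \<in> borel_measurable M" and c: "c > 0"
  shows "cq M \<mu> A (\<lambda>x. c * F x) = ennreal c * cq M \<mu> A F"
proof -
  have cF: "(\<lambda>x. c * F x) \<in> borel_measurable M" using F by measurable
  have Gm: "(\<lambda>t. \<mu> (A \<inter> {x\<in>space M. t \<le> c * F x})) \<in> borel_measurable borel"
    by (rule antimono_borel, rule G_am[OF mon A cF])
  have "cq M \<mu> A (\<lambda>x. c * F x) = ennreal \<bar>c\<bar> * (\<integral>\<^sup>+u. indicator {0..} (0 + c * u) * \<mu> (A \<inter> {x\<in>space M. 0 + c * u \<le> c * F x}) \<partial>lborel)"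
    unfolding cq_def by (rule nn_integral_real_affine) (use Gm c in auto)
  also have "\<dots> = ennreal c * cq M \<mu> A F"
  proof -
    have "indicator {0..} (0 + c * u) = (indicator {0..} u :: ennreal)" for u
      using c by (auto simp: indicator_def zero_le_mult_iff)
    moreover have "{x\<in>space M. 0 + c * u \<le> c * F x} = {x\<in>space M. u \<le> F x}" for u
      using c by auto
    ultimately show ?thesis using c unfolding cq_def by simp
  qed
  finally show ?thesis .
qed

lemma choquet_cq:
  assumes F0: "\<forall>x\<in>space M. F x \<ge> 0"
  shows "choquet M \<mu> A (\<lambda>x. ennreal (F x)) = cq M \<mu> A F"
  unfolding choquet_def cq_def
proof (rule nn_integral_cong)
  fix t :: real
  show "indicator {0..} t * \<mu> (A \<inter> {x \<in> space M. ennreal t \<le> ennreal (F x)}) =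
        indicator {0..} t * \<mu> (A \<inter> {x \<in> space M. t \<le> F x})"
  proof (cases "t \<ge> 0")
    case True
    then have "{x \<in> space M. ennreal t \<le> ennreal (F x)} = {x \<in> space M. t \<le> F x}"
      using F0 by (auto simp: ennreal_le_iff)
    then show ?thesis by simp
  qed simp
qed

lemma cq_null:
  assumes "\<And>t. t > 0 \<Longrightarrow> \<mu> (A \<inter> {x\<in>space M. t \<le> F x}) = 0"
  shows "cq M \<mu> A F = 0"
proof -
  have "cq M \<mu> A F = (\<integral>\<^sup>+(t::real). 0 \<partial>lborel)"
    unfolding cq_def
  proof (rule nn_integral_cong_AE)
    show "AE t in lborel. indicator {0..} t * \<mu> (A \<inter> {x\<in>space M. t \<le> F x}) = 0"
      using AE_lborel_singleton[of 0]
    proof eventually_elim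
      case (elim t)
      then show ?case using assms[of t] by (cases "t > 0") (auto simp: indicator_def)
    qed
  qed
  then show ?thesis by simp
qed

lemma q_facts:
  fixes p q :: real assumes p: "p > 1" and pq: "1 / p + 1 / q = 1"
  shows "q > 1" "1 / q = 1 - 1 / p" "q - 1 = q / p" "1 - q = - q / p" "p + q = p * q"
proof -
  have q1: "1 / q = 1 - 1 / p" using pq by simp
  have "1 / p < 1" using p by simp
  then have "1 / q > 0" using q1 by simp
  then have qpos: "q > 0" by (simp add: zero_less_divide_iff)
  have "1 / q < 1" using q1 p by simp
  then show "q > 1" using qpos by (simp add: divide_less_eq)
  show "1 / q = 1 - 1 / p" by (fact q1)
  have pq2: "p + q = p * q" using pq p qpos by (simp add: field_simps)
  then have qm: "q - 1 = q / p" using p by (simp add: field_simps)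
  show "q - 1 = q / p" by (fact qm)
  show "p + q = p * q" by (fact pq2)
  show "1 - q = - q / p" using qm by simp
qed

lemma young_pt:
  fixes p q c w f :: real
  assumes p: "p > 1" and pq: "1 / p + 1 / q = 1" and c: "c > 0" and w: "w > 0" and f: "f \<ge> 0"
  shows "f \<le> c / p * (f powr p * w) + c powr (1 - q) / q * (1 / w powr (q - 1))"
proof -
  note qf = q_facts[OF p pq]
  define u where "u = (c * (f powr p * w)) powr (1 / p)"
  define v where "v = (c powr (1 - q) * (1 / w powr (q - 1))) powr (1 / q)"
  have u0: "u \<ge> 0" "v \<ge> 0" unfolding u_def v_def by auto
  have "u * v \<le> u powr p / p + v powr q / q"
    by (rule Youngs_inequality[OF p qf(1) pq u0])
  moreover have "u powr p = c * (f powr p * w)"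
    unfolding u_def using p c w f by (simp add: powr_powr)
  moreover have "v powr q = c powr (1 - q) * (1 / w powr (q - 1))"
    unfolding v_def using qf(1) c w by (simp add: powr_powr)
  moreover have "u * v = f"
  proof -
    have "u = c powr (1 / p) * f * w powr (1 / p)"
      unfolding u_def using p c w f by (simp add: powr_mult powr_powr)
    moreover have "v = c powr ((1 - q) / q) / w powr ((q - 1) / q)"
      unfolding v_def using qf(1) c w
      by (simp add: powr_mult powr_powr powr_divide powr_minus_divide)
    ultimately have "u * v = f * (c powr (1 / p) * c powr ((1 - q) / q)) * (w powr (1 / p) / w powr ((q - 1) / q))"
      by (simp add: algebra_simps)
    also have "\<dots> = f * c powr (1 / p + (1 - q) / q) * w powr (1 / p - (q - 1) / q)"
      by (simp add: powr_add powr_diff)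
    also have "1 / p + (1 - q) / q = 0" using qf pq by (simp add: diff_divide_distrib)
    also have "1 / p - (q - 1) / q = 0" using qf pq by (simp add: diff_divide_distrib)
    finally show ?thesis using c w by simp
  qed
  ultimately show ?thesis by (simp add: algebra_simps)
qed

lemma opt_arith:
  fixes p q \<alpha> \<beta> :: real
  assumes p: "p > 1" and pq: "1 / p + 1 / q = 1" and a: "\<alpha> > 0" and b: "\<beta> > 0"
  defines "c \<equiv> \<alpha> powr (1 / p - 1) * \<beta> powr (1 / q)"
  shows "c / p * \<alpha> + c powr (1 - q) / q * \<beta> = \<alpha> powr (1 / p) * \<beta> powr (1 / q)"
proof -
  note qf = q_facts[OF p pq]
  have 1: "c * \<alpha> = \<alpha> powr (1 / p) * \<beta> powr (1 / q)"
    unfolding c_def using a by (simp add: powr_add[symmetric] algebra_simps powr_diff)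
  have "c powr (1 - q) = \<alpha> powr ((1 / p - 1) * (1 - q)) * \<beta> powr ((1 / q) * (1 - q))"
    unfolding c_def using a b by (simp add: powr_mult powr_powr)
  also have "(1 / p - 1) * (1 - q) = 1 / p"
  proof -
    have "(1 - p) * (1 - q) = 1" using qf(5) by (simp add: algebra_simps)
    moreover have "(1 / p - 1) * (1 - q) = (1 - p) * (1 - q) / p" using p by (simp add: field_simps)
    ultimately show ?thesis by simp
  qed
  also have "(1 / q) * (1 - q) = 1 / q - 1" using qf(1) by (simp add: right_diff_distrib)
  finally have "c powr (1 - q) * \<beta> = \<alpha> powr (1 / p) * (\<beta> powr (1 / q - 1) * \<beta>)" by simp
  also have "\<beta> powr (1 / q - 1) * \<beta> = \<beta> powr (1 / q)"
    using b by (simp add: powr_diff)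
  finally have 2: "c powr (1 - q) * \<beta> = \<alpha> powr (1 / p) * \<beta> powr (1 / q)" .
  have "c / p * \<alpha> + c powr (1 - q) / q * \<beta> = (1 / p) * (c * \<alpha>) + (1 / q) * (c powr (1 - q) * \<beta>)"
    by simp
  also have "\<dots> = (1 / p + 1 / q) * (\<alpha> powr (1 / p) * \<beta> powr (1 / q))"
    unfolding 1 2 by (simp add: algebra_simps)
  finally show ?thesis using pq by simp
qed

lemma recip_meas:
  assumes [measurable]: "(w::'a \<Rightarrow> real) \<in> borel_measurable M"
  shows "(\<lambda>x. recip_pow q (w x)) \<in> borel_measurable M"
  unfolding recip_pow_def by measurable

lemma choquet_mono_gen:
  assumes mon: "monotone_measure M \<mu>" and A: "A \<in> sets M"
    and F: "F \<in> borel_measurable M" and H: "H \<in> borel_measurable M"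
    and le: "\<forall>x\<in>space M. F x \<le> H x"
  shows "choquet M \<mu> A F \<le> choquet M \<mu> A H"
  unfolding choquet_def
proof (intro nn_integral_mono mult_left_mono mu_mono[OF mon])
  fix t :: real
  show "A \<inter> {x \<in> space M. ennreal t \<le> F x} \<in> sets M" using A F by measurable
  show "A \<inter> {x \<in> space M. ennreal t \<le> H x} \<in> sets M" using A H by measurable
  show "A \<inter> {x \<in> space M. ennreal t \<le> F x} \<subseteq> A \<inter> {x \<in> space M. ennreal t \<le> H x}"
    using le order_trans by blast
qed simp

lemma choquet_cong:
  assumes "\<forall>x\<in>space M. F x = H x"
  shows "choquet M \<mu> A F = choquet M \<mu> A H"
proof -
  have "{x \<in> space M. ennreal t \<le> F x} = {x \<in> space M. ennreal t \<le> H x}" for t using assms by auto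
  then show ?thesis unfolding choquet_def by simp
qed

lemma cq_cong:
  assumes mon: "monotone_measure M \<mu>" and A: "A \<in> sets M"
    and F: "F \<in> borel_measurable M" and H: "H \<in> borel_measurable M"
    and eq: "\<forall>x\<in>space M. F x = H x"
  shows "cq M \<mu> A F = cq M \<mu> A H"
  using cq_mono[OF mon A F H] cq_mono[OF mon A H F] eq by (simp add: antisym)

lemma lborel_Ici_top: "emeasure lborel {0::real..} = \<infinity>"
proof -
  have "of_nat n \<le> emeasure lborel {0::real..}" for n :: nat
  proof -
    have "emeasure lborel {0::real..real n} \<le> emeasure lborel {0::real..}"
      by (rule emeasure_mono) auto
    then show ?thesis by (simp add: ennreal_of_nat_eq_real_of_nat)
  qed
  then have "(SUP n. of_nat n :: ennreal) \<le> emeasure lborel {0::real..}" by (rule SUP_least)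
  then show ?thesis by (simp add: ennreal_SUP_of_nat_eq_top top_unique)
qed

lemma const_integral_top: "c \<noteq> 0 \<Longrightarrow> (\<integral>\<^sup>+(t::real). indicator {0..} t * c \<partial>lborel) = \<infinity>"
proof -
  assume c: "c \<noteq> 0"
  have "(\<integral>\<^sup>+(t::real). indicator {0..} t * c \<partial>lborel) = (\<integral>\<^sup>+(t::real). c * indicator {0..} t \<partial>lborel)"
    by (simp add: mult.commute)
  also have "\<dots> = c * emeasure lborel {0::real..}" by (rule nn_integral_cmult_indicator) simp
  finally show ?thesis using c by (simp add: lborel_Ici_top ennreal_mult_top)
qed

lemma part1:
  fixes M :: "'a measure" and \<mu> :: "'a set \<Rightarrow> ennreal" and A :: "'a set"
    and p q a b :: real and f g h :: "'a \<Rightarrow> real"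
  assumes mon: "monotone_measure M \<mu>" and sub: "submodular M \<mu>"
    and A: "A \<in> sets M"
    and p: "p > 1" and pq: "1 / p + 1 / q = 1"
    and f: "f \<in> borel_measurable M" "\<forall>x\<in>space M. f x \<ge> 0"
    and g: "g \<in> borel_measurable M" "\<forall>x\<in>space M. g x \<ge> 0"
    and h: "h \<in> borel_measurable M" "\<forall>x\<in>space M. h x \<ge> 0"
    and a: "a > 0" and b: "b > 0"
    and ca: "cq M \<mu> A (\<lambda>x. g x * f x powr p) = ennreal a"
    and cb: "cq M \<mu> A (\<lambda>x. h x * f x powr p) = ennreal b"
    and Ifin: "choquet M \<mu> A (\<lambda>x. recip_pow q (b * g x + a * h x)) = ennreal Ir" and Ir: "Ir \<ge> 0"
  shows "cq M \<mu> A f \<le> ennreal ((2 * a * b) powr (1 / p) * Ir powr (1 / q))"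
proof -
  note qf = q_facts[OF p pq]
  note [measurable] = f(1) g(1) h(1)
  define w where "w x = b * g x + a * h x" for x
  have wm[measurable]: "w \<in> borel_measurable M" unfolding w_def by measurable
  have w0: "\<forall>x\<in>space M. w x \<ge> 0" unfolding w_def using g h a b by auto
  have rm: "(\<lambda>x. recip_pow q (w x)) \<in> borel_measurable M" by (rule recip_meas[OF wm])
  have I: "choquet M \<mu> A (\<lambda>x. recip_pow q (w x)) = ennreal Ir" using Ifin unfolding w_def .
  define Z where "Z = {x\<in>space M. w x = 0}"
  have Zs: "Z \<in> sets M" unfolding Z_def by measurable
  have Z0: "\<mu> (A \<inter> Z) = 0"
  proof (rule ccontr)
    assume nz: "\<mu> (A \<inter> Z) \<noteq> 0"
    have "(\<integral>\<^sup>+(t::real). indicator {0..} t * \<mu> (A \<inter> Z) \<partial>lborel) \<le> choquet M \<mu> A (\<lambda>x. recip_pow q (w x))"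
      unfolding choquet_def
    proof (intro nn_integral_mono mult_left_mono mu_mono[OF mon])
      fix t :: real
      show "A \<inter> Z \<in> sets M" using A Zs by auto
      show "A \<inter> {x \<in> space M. ennreal t \<le> recip_pow q (w x)} \<in> sets M" using A rm by measurable
      show "A \<inter> Z \<subseteq> A \<inter> {x \<in> space M. ennreal t \<le> recip_pow q (w x)}"
        unfolding Z_def recip_pow_def by auto
    qed simp
    then show False using const_integral_top[OF nz] I by (simp add: top_unique)
  qed
  define f1 where "f1 x = (if w x = 0 then 0 else f x)" for x
  define f2 where "f2 x = (if w x = 0 then f x else 0)" for x
  have f1m[measurable]: "f1 \<in> borel_measurable M" unfolding f1_def by measurable
  have f2m[measurable]: "f2 \<in> borel_measurable M" unfolding f2_def by measurable
  have f10: "\<forall>x\<in>space M. f1 x \<ge> 0" "\<forall>x\<in>space M. f2 x \<ge> 0" unfolding f1_def f2_def using f(2) by auto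
  have "cq M \<mu> A f \<le> cq M \<mu> A (\<lambda>x. f1 x + f2 x)"
    by (rule cq_mono[OF mon A]) (auto simp: f1_def f2_def)
  also have "\<dots> \<le> cq M \<mu> A f1 + cq M \<mu> A f2"
    by (rule cq_sub[OF mon sub A f1m f10(1) f2m f10(2)])
  also have "cq M \<mu> A f2 = 0"
  proof (rule cq_null)
    fix t :: real assume t: "t > 0"
    have "\<mu> (A \<inter> {x\<in>space M. t \<le> f2 x}) \<le> \<mu> (A \<inter> Z)"
      by (rule mu_mono[OF mon]) (use A Zs t in \<open>auto simp: f2_def Z_def split: if_splits\<close>)
    then show "\<mu> (A \<inter> {x\<in>space M. t \<le> f2 x}) = 0" using Z0 by simp
  qed
  finally have cf: "cq M \<mu> A f \<le> cq M \<mu> A f1" by simp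
  define R where "R x = (if w x = 0 then 0 else 1 / (w x powr (q - 1)))" for x
  have Rm[measurable]: "R \<in> borel_measurable M" unfolding R_def by measurable
  have R0: "\<forall>x\<in>space M. R x \<ge> 0" unfolding R_def by auto
  have cR: "cq M \<mu> A R \<le> ennreal Ir"
  proof -
    have "cq M \<mu> A R = choquet M \<mu> A (\<lambda>x. ennreal (R x))" by (rule choquet_cq[symmetric, OF R0])
    also have "\<dots> \<le> choquet M \<mu> A (\<lambda>x. recip_pow q (w x))"
      by (rule choquet_mono_gen[OF mon A _ rm]) (auto simp: R_def recip_pow_def)
    finally show ?thesis using I by simp
  qed
  define P where "P x = f x powr p * w x" for x
  have Pm[measurable]: "P \<in> borel_measurable M" unfolding P_def by measurable
  have P0: "\<forall>x\<in>space M. P x \<ge> 0" unfolding P_def using w0 by auto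
  define Pg where "Pg x = g x * f x powr p" for x
  define Ph where "Ph x = h x * f x powr p" for x
  have Pgm[measurable]: "Pg \<in> borel_measurable M" unfolding Pg_def by measurable
  have Phm[measurable]: "Ph \<in> borel_measurable M" unfolding Ph_def by measurable
  have cP: "cq M \<mu> A P \<le> ennreal (2 * a * b)"
  proof -
    have "cq M \<mu> A P \<le> cq M \<mu> A (\<lambda>x. b * Pg x + a * Ph x)"
      by (rule cq_mono[OF mon A]) (auto simp: P_def Pg_def Ph_def w_def algebra_simps)
    also have "\<dots> \<le> cq M \<mu> A (\<lambda>x. b * Pg x) + cq M \<mu> A (\<lambda>x. a * Ph x)"
      by (rule cq_sub[OF mon sub A]) (use g h f a b in \<open>auto simp: Pg_def Ph_def\<close>)
    also have "\<dots> = ennreal b * ennreal a + ennreal a * ennreal b"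
      using ca cb unfolding Pg_def Ph_def by (simp add: cq_cmult[OF mon A _ a] cq_cmult[OF mon A _ b])
    also have "\<dots> = ennreal (2 * a * b)" using a b by (simp add: ennreal_mult[symmetric] ennreal_plus[symmetric] del: ennreal_plus)
    finally show ?thesis .
  qed
  have key: "cq M \<mu> A f \<le> ennreal (c / p * (2 * a * b) + c powr (1 - q) / q * Ir)" if c: "c > 0" for c
  proof -
    have c1: "c / p > 0" "c powr (1 - q) / q > 0" using c p qf(1) by auto
    have "cq M \<mu> A f1 \<le> cq M \<mu> A (\<lambda>x. c / p * P x + c powr (1 - q) / q * R x)"
    proof (rule cq_mono[OF mon A])
      show "\<forall>x\<in>space M. f1 x \<le> c / p * P x + c powr (1 - q) / q * R x"
      proof
        fix x assume x: "x \<in> space M"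
        show "f1 x \<le> c / p * P x + c powr (1 - q) / q * R x"
        proof (cases "w x = 0")
          case True
          have n1: "0 \<le> c / p * P x" using c1 P0 x by (intro mult_nonneg_nonneg) auto
          have n2: "0 \<le> c powr (1 - q) / q * R x" using c1 R0 x by (intro mult_nonneg_nonneg) auto
          have "f1 x = 0" using True by (simp add: f1_def)
          then show ?thesis using add_nonneg_nonneg[OF n1 n2] by (simp only:)
        next
          case False
          then have "w x > 0" using w0 x by (simp add: less_le)
          then show ?thesis using young_pt[OF p pq c _ f(2)[rule_format, OF x]] False
            by (simp add: f1_def P_def R_def)
        qed
      qed
    qed simp_all
    also have "\<dots> \<le> cq M \<mu> A (\<lambda>x. c / p * P x) + cq M \<mu> A (\<lambda>x. c powr (1 - q) / q * R x)"
    proof -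
      have "\<forall>x\<in>space M. 0 \<le> c / p * P x" using c1(1) P0 by (metis less_imp_le mult_nonneg_nonneg)
      moreover have "\<forall>x\<in>space M. 0 \<le> c powr (1 - q) / q * R x" using c1(2) R0 by (metis less_imp_le mult_nonneg_nonneg)
      ultimately show ?thesis by (intro cq_sub[OF mon sub A]) simp_all
    qed
    also have "\<dots> = ennreal (c / p) * cq M \<mu> A P + ennreal (c powr (1 - q) / q) * cq M \<mu> A R"
      by (simp only: cq_cmult[OF mon A Pm c1(1)] cq_cmult[OF mon A Rm c1(2)])
    also have "\<dots> \<le> ennreal (c / p) * ennreal (2 * a * b) + ennreal (c powr (1 - q) / q) * ennreal Ir"
      by (intro add_mono mult_left_mono cP cR) auto
    also have "\<dots> = ennreal (c / p * (2 * a * b) + c powr (1 - q) / q * Ir)"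
    proof -
      have x1: "0 \<le> c / p * (2 * a * b)" using c1 a b by (metis less_imp_le mult_nonneg_nonneg mult_pos_pos zero_less_numeral)
      have x2: "0 \<le> c powr (1 - q) / q * Ir" using c1 Ir by (metis less_imp_le mult_nonneg_nonneg)
      have "ennreal (c / p) * ennreal (2 * a * b) = ennreal (c / p * (2 * a * b))"
        by (rule ennreal_mult[symmetric]) (use c1 a b in auto)
      moreover have "ennreal (c powr (1 - q) / q) * ennreal Ir = ennreal (c powr (1 - q) / q * Ir)"
        by (rule ennreal_mult[symmetric]) (use c1 Ir in auto)
      moreover have "ennreal (c / p * (2 * a * b)) + ennreal (c powr (1 - q) / q * Ir)
          = ennreal (c / p * (2 * a * b) + c powr (1 - q) / q * Ir)"
        by (rule ennreal_plus[symmetric, OF x1 x2])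
      ultimately show ?thesis by (simp only:)
    qed
    finally show ?thesis using cf by (rule order_trans[rotated])
  qed
  show ?thesis
  proof (cases "Ir = 0")
    case True
    have "cq M \<mu> A f \<le> 0"
    proof (rule ennreal_le_epsilon)
      fix e :: real assume e: "0 < e"
      define c where "c = e * p / (2 * a * b)"
      have c: "c > 0" unfolding c_def using e p a b by auto
      have "c / p * (2 * a * b) = e" unfolding c_def using p a b by (simp add: field_simps)
      then show "cq M \<mu> A f \<le> 0 + ennreal e" using key[OF c] True by simp
    qed
    then show ?thesis by simp
  next
    case False
    then have Irp: "Ir > 0" using Ir by simp
    have ab: "2 * a * b > 0" using a b by simp
    have cpos: "(2 * a * b) powr (1 / p - 1) * Ir powr (1 / q) > 0" using ab Irp by (intro mult_pos_pos) auto
    show ?thesis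
      using key[OF cpos] unfolding opt_arith[OF p pq ab Irp] .
  qed
qed

lemma Hpq_fin:
  assumes a: "a > 0" and b: "b > 0" and Ir: "Ir \<ge> 0"
  shows "ennreal (2 powr (1 / p)) * Hpq p q a b (ennreal Ir) = ennreal ((2 * a * b) powr (1 / p) * Ir powr (1 / q))"
proof -
  have "Hpq p q a b (ennreal Ir) = ennreal ((a * b) powr (1 / p) * Ir powr (1 / q))"
    unfolding Hpq_def using Ir by simp
  moreover have "(2 * a * b) powr (1 / p) = 2 powr (1 / p) * (a * b) powr (1 / p)"
    using a b by (simp add: powr_mult mult.assoc)
  ultimately show ?thesis
    by (simp add: ennreal_mult[symmetric] mult.assoc)
qed

lemma Hpq_top: "ennreal (2 powr (1 / p)) * Hpq p q a b \<infinity> = \<infinity>"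
  unfolding Hpq_def by (simp add: ennreal_mult_top)

lemma part2:
  fixes M :: "'a measure" and \<mu> :: "'a set \<Rightarrow> ennreal" and A :: "'a set"
    and p q a b \<gamma> :: real and f g h :: "'a \<Rightarrow> real"
  assumes mon: "monotone_measure M \<mu>" and A: "A \<in> sets M"
    and p: "p > 1" and pq: "1 / p + 1 / q = 1"
    and f: "f \<in> borel_measurable M" "\<forall>x\<in>space M. f x \<ge> 0"
    and g: "g \<in> borel_measurable M" "\<forall>x\<in>space M. g x \<ge> 0"
    and h: "h \<in> borel_measurable M" "\<forall>x\<in>space M. h x \<ge> 0"
    and a: "a > 0" and b: "b > 0"
    and ca: "cq M \<mu> A (\<lambda>x. g x * f x powr p) = ennreal a"
    and cb: "cq M \<mu> A (\<lambda>x. h x * f x powr p) = ennreal b"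
    and P1: "cq M \<mu> A f \<le> ennreal (2 powr (1 / p)) * Hpq p q a b (choquet M \<mu> A (\<lambda>x. recip_pow q (b * g x + a * h x)))"
    and \<gamma>: "\<gamma> \<ge> 0" "\<forall>x\<in>space M. (b * g x + a * h x) powr q * f x powr p = \<gamma>"
    and cond: "modular M \<mu> \<or> comonotone (space M) (\<lambda>x. g x * f x powr p) (\<lambda>x. h x * f x powr p)"
  shows "cq M \<mu> A f = ennreal (2 powr (1 / p)) * Hpq p q a b (choquet M \<mu> A (\<lambda>x. recip_pow q (b * g x + a * h x)))"
proof -
  note qf = q_facts[OF p pq]
  note [measurable] = f(1) g(1) h(1)
  define w where "w x = b * g x + a * h x" for x
  have wm[measurable]: "w \<in> borel_measurable M" unfolding w_def by measurable
  have w0: "\<forall>x\<in>space M. w x \<ge> 0" unfolding w_def using g h a b by auto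
  define I where "I = choquet M \<mu> A (\<lambda>x. recip_pow q (w x))"
  have Ieq: "choquet M \<mu> A (\<lambda>x. recip_pow q (b * g x + a * h x)) = I" unfolding I_def w_def ..
  have hw: "\<forall>x\<in>space M. w x powr q * f x powr p = \<gamma>" using \<gamma>(2) unfolding w_def .
  define Pg where "Pg x = g x * f x powr p" for x
  define Ph where "Ph x = h x * f x powr p" for x
  have Pgm[measurable]: "Pg \<in> borel_measurable M" unfolding Pg_def by measurable
  have Phm[measurable]: "Ph \<in> borel_measurable M" unfolding Ph_def by measurable
  have Pg0: "\<forall>x\<in>space M. Pg x \<ge> 0" unfolding Pg_def using g f by auto
  have Ph0: "\<forall>x\<in>space M. Ph x \<ge> 0" unfolding Ph_def using h f by auto
  have gpos: "\<gamma> > 0"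
  proof (rule ccontr)
    assume "\<not> \<gamma> > 0"
    then have g0: "\<gamma> = 0" using \<gamma>(1) by simp
    have "\<forall>x\<in>space M. Pg x = 0"
    proof
      fix x assume x: "x \<in> space M"
      have "w x powr q * f x powr p = 0" using hw g0 x by simp
      then have "w x = 0 \<or> f x = 0" by simp
      then show "Pg x = 0"
      proof
        assume "w x = 0"
        then have "b * g x = 0" using g h a b x unfolding w_def
          by (metis add_nonneg_eq_0_iff less_imp_le mult_nonneg_nonneg)
        then show ?thesis using b unfolding Pg_def by simp
      qed (simp add: Pg_def)
    qed
    then have "cq M \<mu> A Pg = 0"
      by (intro cq_null) (auto simp: mu_empty[OF mon] cong: conj_cong)
    then show False using ca a unfolding Pg_def by simp
  qed
  have wpos: "\<forall>x\<in>space M. w x > 0"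
  proof
    fix x assume x: "x \<in> space M"
    have "w x \<noteq> 0" using hw x gpos by fastforce
    then show "w x > 0" using w0 x by (simp add: less_le)
  qed
  define R where "R x = 1 / (w x powr (q - 1))" for x
  have Rm[measurable]: "R \<in> borel_measurable M" unfolding R_def by measurable
  have R0: "\<forall>x\<in>space M. R x \<ge> 0" unfolding R_def by auto
  have IR: "I = cq M \<mu> A R"
  proof -
    have "I = choquet M \<mu> A (\<lambda>x. ennreal (R x))"
      unfolding I_def by (rule choquet_cong) (use wpos in \<open>auto simp: recip_pow_def R_def\<close>)
    then show ?thesis using choquet_cq[OF R0] by simp
  qed
  have fR: "\<forall>x\<in>space M. f x = \<gamma> powr (1 / p) * R x"
  proof
    fix x assume x: "x \<in> space M"
    have wx: "w x > 0" using wpos x by simp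
    have fp: "f x powr p = \<gamma> / w x powr q" using hw x wx by (simp add: field_simps)
    have "f x = (f x powr p) powr (1 / p)" using f(2) x p by (simp add: powr_powr)
    also have "\<dots> = \<gamma> powr (1 / p) / (w x powr q) powr (1 / p)" unfolding fp using gpos wx by (simp add: powr_divide)
    also have "(w x powr q) powr (1 / p) = w x powr (q - 1)" using qf(3) by (simp add: powr_powr)
    finally show "f x = \<gamma> powr (1 / p) * R x" unfolding R_def by simp
  qed
  have PR: "\<forall>x\<in>space M. b * Pg x + a * Ph x = \<gamma> * R x"
  proof
    fix x assume x: "x \<in> space M"
    have wx: "w x > 0" using wpos x by simp
    have fp: "f x powr p = \<gamma> / w x powr q" using hw x wx by (simp add: field_simps)
    have "b * Pg x + a * Ph x = f x powr p * w x" unfolding Pg_def Ph_def w_def by (simp add: algebra_simps)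
    also have "\<dots> = \<gamma> / (w x powr q / w x)" unfolding fp using wx by simp
    also have "w x powr q / w x = w x powr (q - 1)" using wx by (simp add: powr_diff)
    finally show "b * Pg x + a * Ph x = \<gamma> * R x" unfolding R_def by simp
  qed
  have cond': "modular M \<mu> \<or> comonotone (space M) (\<lambda>x. b * Pg x) (\<lambda>x. a * Ph x)"
  proof (cases "modular M \<mu>")
    case False
    then have c: "comonotone (space M) Pg Ph" using cond unfolding Pg_def Ph_def by simp
    have "comonotone (space M) (\<lambda>x. b * Pg x) (\<lambda>x. a * Ph x)"
      unfolding comonotone_def
    proof (intro ballI)
      fix x y assume "x \<in> space M" "y \<in> space M"
      then have "(Pg x - Pg y) * (Ph x - Ph y) \<ge> 0" using c unfolding comonotone_def by blast
      then have "(b * a) * ((Pg x - Pg y) * (Ph x - Ph y)) \<ge> 0" using a b by simp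
      then show "(b * Pg x - b * Pg y) * (a * Ph x - a * Ph y) \<ge> 0" by (simp add: algebra_simps)
    qed
    then show ?thesis by simp
  qed simp
  have bPg0: "\<forall>x\<in>space M. b * Pg x \<ge> 0" using Pg0 b by simp
  have aPh0: "\<forall>x\<in>space M. a * Ph x \<ge> 0" using Ph0 a by simp
  have "ennreal (2 * a * b) = ennreal b * ennreal a + ennreal a * ennreal b"
    using a b by (simp add: ennreal_mult[symmetric] flip: ennreal_plus)
  also have "\<dots> = cq M \<mu> A (\<lambda>x. b * Pg x) + cq M \<mu> A (\<lambda>x. a * Ph x)"
    using ca cb unfolding Pg_def Ph_def by (simp only: cq_cmult[OF mon A _ a] cq_cmult[OF mon A _ b] Pgm[unfolded Pg_def] Phm[unfolded Ph_def])
  also have "\<dots> \<le> cq M \<mu> A (\<lambda>x. b * Pg x + a * Ph x)"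
    by (rule cq_super[OF mon A _ bPg0 _ aPh0 cond']) simp_all
  also have "\<dots> = cq M \<mu> A (\<lambda>x. \<gamma> * R x)"
    by (rule cq_cong[OF mon A]) (use PR in simp_all)
  also have "\<dots> = ennreal \<gamma> * I" unfolding IR by (rule cq_cmult[OF mon A Rm gpos])
  finally have key: "ennreal (2 * a * b) \<le> ennreal \<gamma> * I" .
  have cf: "cq M \<mu> A f = ennreal (\<gamma> powr (1 / p)) * I"
  proof -
    have "cq M \<mu> A f = cq M \<mu> A (\<lambda>x. \<gamma> powr (1 / p) * R x)"
      by (rule cq_cong[OF mon A]) (use fR in simp_all)
    also have "\<dots> = ennreal (\<gamma> powr (1 / p)) * I" unfolding IR by (rule cq_cmult[OF mon A Rm]) (use gpos in simp)
    finally show ?thesis .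
  qed
  show ?thesis
    unfolding Ieq
  proof (cases "I = \<infinity>")
    case True
    then show "cq M \<mu> A f = ennreal (2 powr (1 / p)) * Hpq p q a b I"
    proof -
      have "cq M \<mu> A f = \<infinity>" using cf gpos True by (simp add: ennreal_mult_top)
      moreover have "ennreal (2 powr (1 / p)) * Hpq p q a b I = \<infinity>" using True Hpq_top[of p q a b] by simp
      ultimately show ?thesis by simp
    qed
  next
    case False
    define Ir where "Ir = enn2real I"
    have IIr: "I = ennreal Ir" unfolding Ir_def using False by (simp add: less_top)
    have Ir0: "Ir \<ge> 0" unfolding Ir_def by simp
    have "ennreal \<gamma> * ennreal Ir = ennreal (\<gamma> * Ir)" by (rule ennreal_mult[symmetric]) (use gpos Ir0 in auto)
    then have "ennreal (2 * a * b) \<le> ennreal (\<gamma> * Ir)" using key unfolding IIr by simp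
    moreover have "0 \<le> \<gamma> * Ir" using gpos Ir0 by simp
    ultimately have "2 * a * b \<le> \<gamma> * Ir" by (simp only: ennreal_le_iff)
    have Irp: "Ir > 0"
    proof (rule ccontr)
      assume "\<not> Ir > 0"
      then have "Ir = 0" using Ir0 by simp
      then have "2 * a * b \<le> 0" using \<open>2 * a * b \<le> \<gamma> * Ir\<close> by simp
      moreover have "2 * a * b > 0" using a b by simp
      ultimately show False by simp
    qed
    have "(2 * a * b) powr (1 / p) * Ir powr (1 / q) \<le> (\<gamma> * Ir) powr (1 / p) * Ir powr (1 / q)"
      using \<open>2 * a * b \<le> \<gamma> * Ir\<close> a b p by (intro mult_right_mono powr_mono2) auto
    also have "\<dots> = \<gamma> powr (1 / p) * Ir powr (1 / p + 1 / q)"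
      using gpos Irp by (simp add: powr_mult powr_add)
    also have "\<dots> = \<gamma> powr (1 / p) * Ir" using pq Irp by simp
    finally have le: "(2 * a * b) powr (1 / p) * Ir powr (1 / q) \<le> \<gamma> powr (1 / p) * Ir" .
    have "ennreal (2 powr (1 / p)) * Hpq p q a b I = ennreal ((2 * a * b) powr (1 / p) * Ir powr (1 / q))"
      unfolding IIr by (rule Hpq_fin[OF a b Ir0])
    also have "\<dots> \<le> ennreal (\<gamma> powr (1 / p) * Ir)" using le by (rule ennreal_leI)
    also have "\<dots> = cq M \<mu> A f" unfolding cf IIr using Ir0 by (simp add: ennreal_mult)
    finally have "ennreal (2 powr (1 / p)) * Hpq p q a b I \<le> cq M \<mu> A f" .
    moreover have "cq M \<mu> A f \<le> ennreal (2 powr (1 / p)) * Hpq p q a b I" using P1 unfolding Ieq .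
    ultimately show "cq M \<mu> A f = ennreal (2 powr (1 / p)) * Hpq p q a b I" by simp
  qed
qed

theorem mainTheorem7:
  fixes M :: "'a measure" and \<mu> :: "'a set \<Rightarrow> ennreal" and A :: "'a set"
    and p q :: real and f g h :: "'a \<Rightarrow> real"
  assumes mon: "monotone_measure M \<mu>" and sub: "submodular M \<mu>"
    and A: "A \<in> sets M"
    and p: "p > 1" and pq: "1 / p + 1 / q = 1"
    and f: "f \<in> borel_measurable M" "\<forall>x\<in>space M. f x \<ge> 0"
    and g: "g \<in> borel_measurable M" "\<forall>x\<in>space M. g x \<ge> 0"
    and h: "h \<in> borel_measurable M" "\<forall>x\<in>space M. h x \<ge> 0"
    and a_fin: "0 < choquet M \<mu> A (\<lambda>x. ennreal (g x * f x powr p))"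
               "choquet M \<mu> A (\<lambda>x. ennreal (g x * f x powr p)) < \<infinity>"
    and b_fin: "0 < choquet M \<mu> A (\<lambda>x. ennreal (h x * f x powr p))"
               "choquet M \<mu> A (\<lambda>x. ennreal (h x * f x powr p)) < \<infinity>"
  shows "let a = enn2real (choquet M \<mu> A (\<lambda>x. ennreal (g x * f x powr p)));
             b = enn2real (choquet M \<mu> A (\<lambda>x. ennreal (h x * f x powr p)));
             H = Hpq p q a b (choquet M \<mu> A (\<lambda>x. recip_pow q (b * g x + a * h x)))
         in choquet M \<mu> A (\<lambda>x. ennreal (f x)) \<le> ennreal (2 powr (1 / p)) * H
          \<and> ((\<exists>\<gamma>\<ge>0. \<forall>x\<in>space M. (b * g x + a * h x) powr q * f x powr p = \<gamma>)
               \<and> (modular M \<mu> \<or>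
                  comonotone (space M) (\<lambda>x. g x * f x powr p) (\<lambda>x. h x * f x powr p))
             \<longrightarrow> choquet M \<mu> A (\<lambda>x. ennreal (f x)) = ennreal (2 powr (1 / p)) * H)"
proof -
  define a where "a = enn2real (choquet M \<mu> A (\<lambda>x. ennreal (g x * f x powr p)))"
  define b where "b = enn2real (choquet M \<mu> A (\<lambda>x. ennreal (h x * f x powr p)))"
  have Pg0: "\<forall>x\<in>space M. g x * f x powr p \<ge> 0" using g f by auto
  have Ph0: "\<forall>x\<in>space M. h x * f x powr p \<ge> 0" using h f by auto
  have cha: "choquet M \<mu> A (\<lambda>x. ennreal (g x * f x powr p)) = ennreal a"
    unfolding a_def using a_fin(2) by simp
  have chb: "choquet M \<mu> A (\<lambda>x. ennreal (h x * f x powr p)) = ennreal b"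
    unfolding b_def using b_fin(2) by simp
  have a: "a > 0" using a_fin(1) unfolding cha by simp
  have b: "b > 0" using b_fin(1) unfolding chb by simp
  have ca: "cq M \<mu> A (\<lambda>x. g x * f x powr p) = ennreal a" using choquet_cq[OF Pg0] cha by simp
  have cb: "cq M \<mu> A (\<lambda>x. h x * f x powr p) = ennreal b" using choquet_cq[OF Ph0] chb by simp
  have chf: "choquet M \<mu> A (\<lambda>x. ennreal (f x)) = cq M \<mu> A f" by (rule choquet_cq[OF f(2)])
  define I where "I = choquet M \<mu> A (\<lambda>x. recip_pow q (b * g x + a * h x))"
  have P1: "cq M \<mu> A f \<le> ennreal (2 powr (1 / p)) * Hpq p q a b I"
  proof (cases "I = \<infinity>")
    case True
    then have "ennreal (2 powr (1 / p)) * Hpq p q a b I = \<infinity>" using Hpq_top[of p q a b] by simp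
    then show ?thesis by simp
  next
    case False
    define Ir where "Ir = enn2real I"
    have IIr: "I = ennreal Ir" unfolding Ir_def using False by (simp add: less_top)
    have Ir0: "Ir \<ge> 0" unfolding Ir_def by simp
    have "cq M \<mu> A f \<le> ennreal ((2 * a * b) powr (1 / p) * Ir powr (1 / q))"
      by (rule part1[OF mon sub A p pq f g h a b ca cb _ Ir0]) (use IIr in \<open>simp only: I_def\<close>)
    then show ?thesis unfolding IIr Hpq_fin[OF a b Ir0] .
  qed
  have P2: "cq M \<mu> A f = ennreal (2 powr (1 / p)) * Hpq p q a b I"
    if ex: "\<exists>\<gamma>\<ge>0. \<forall>x\<in>space M. (b * g x + a * h x) powr q * f x powr p = \<gamma>"
       and cnd: "modular M \<mu> \<or> comonotone (space M) (\<lambda>x. g x * f x powr p) (\<lambda>x. h x * f x powr p)"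
  proof -
    obtain \<gamma> where \<gamma>0: "\<gamma> \<ge> 0 \<and> (\<forall>x\<in>space M. (b * g x + a * h x) powr q * f x powr p = \<gamma>)"
      using ex by blast
    note \<gamma> = conjunct1[OF \<gamma>0] conjunct2[OF \<gamma>0]
    show ?thesis unfolding I_def
      by (rule part2[OF mon A p pq f g h a b ca cb _ \<gamma> cnd]) (use P1 in \<open>simp only: I_def\<close>)
  qed
  show ?thesis
    unfolding Let_def a_def[symmetric] b_def[symmetric] I_def[symmetric] chf
    using P1 P2 by (intro conjI impI) (simp, elim conjE, assumption)
qed

end
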